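(* Let $\mathcal E$ be a finite dimensional Hilbert space, $n\ge2$, and let $(\psi_1,\dots,\psi_n)$ be a factorizing tuple. Then there is a unique pair $(\underline A,\underline B)$, where $\underline A=(A_1,\dots,A_n)$ is a tuple of self-adjoint operators and $\underline B=(B_1,\dots,B_n)$ a tuple of positive contractions on $\mathcal E$, satisfying (1) $A_jA_k=A_kA_j$ and $B_jB_k=B_kB_j$ for all $j,k$; (2) $A_jB_k+B_jA_k=A_kB_j+B_kA_j$ for all $j,k$; (3) $A_1+\cdots+A_n=0$ and $B_1+\cdots+B_n=I$; such that $(\psi_j(z)+I)(\psi_j(z)-I)^{-1}=iA_j+\zeta(z)B_j$ for all $z\in\mathbb D$ and $j=1,\dots,n$. Consequently $\psi_j(z)=(iA_j+\zeta(z)B_j+I)(iA_j+\zeta(z)B_j-I)^{-1}$ for all $z\in\mathbb D$ and all $j$.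
   Context: $\mathbb D$ is the open unit disc, $\zeta(z)=\frac{z+1}{z-1}$, $H^2_{\mathbb D}(\mathcal E)$ the $\mathcal E$-valued Hardy space, $M_\psi$ multiplication by $\psi$. $\mathcal C=\{\psi\in H^\infty_{\mathbb D}(\mathcal B(\mathcal E)):\sup_z\|\psi(z)\|\le1,\ 1\text{ is not an eigenvalue of }\psi(z)\text{ for any }z\in\mathbb D\}$. $\varphi_t(\lambda)=e^{t\frac{\lambda+1}{\lambda-1}}$, $(\varphi_t\circ\psi)(z)=\varphi_t(\psi(z))$, $\mathfrak z^{\mathcal E}(w)=wI_{\mathcal E}$. A tuple $(\psi_1,\dots,\psi_n)$ with $\psi_j\in\mathcal C$ is a factorizing tuple if $M_{\varphi_t\circ\psi_j}M_{\varphi_t\circ\psi_k}=M_{\varphi_t\circ\psi_k}M_{\varphi_t\circ\psi_j}$ for all $j,k$ and $t\ge0$, and $M_{\varphi_t\circ\psi_1}\cdots M_{\varphi_t\circ\psi_n}=M_{\varphi_t\circ\mathfrak z^{\mathcal E}}$ for all $t\ge0$. *)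

theory Defs
  imports "HOL-Analysis.Analysis"
begin


text \<open>The finite dimensional Hilbert space E is modelled as complex ^ 'n (norm = l2 norm);
  operators on E are complex matrices complex ^ 'n ^ 'n acting by *v.\<close>

type_synonym 'n cmat = "complex ^ 'n ^ 'n"

definition unit_disc :: "complex set" where
  "unit_disc = ball 0 1"

definition zeta :: "complex \<Rightarrow> complex" where
  "zeta z = (z + 1) / (z - 1)"

definition cscale :: "complex \<Rightarrow> ('n::finite) cmat \<Rightarrow> ('n::finite) cmat" where
  "cscale c A = (\<chi> i j. c * A $ i $ j)"

definition cinner :: "complex ^ ('n::finite) \<Rightarrow> complex ^ ('n::finite) \<Rightarrow> complex" where
  "cinner x y = (\<Sum>i\<in>UNIV. x $ i * cnj (y $ i))"

definition adjoint_mat :: "('n::finite) cmat \<Rightarrow> ('n::finite) cmat" where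
  "adjoint_mat A = (\<chi> i j. cnj (A $ j $ i))"

definition self_adjoint :: "('n::finite) cmat \<Rightarrow> bool" where
  "self_adjoint A \<longleftrightarrow> adjoint_mat A = A"

definition op_norm :: "('n::finite) cmat \<Rightarrow> real" where
  "op_norm A = onorm (\<lambda>x. A *v x)"

definition positive_op :: "('n::finite) cmat \<Rightarrow> bool" where
  "positive_op A \<longleftrightarrow> (\<forall>x. Im (cinner (A *v x) x) = 0 \<and> Re (cinner (A *v x) x) \<ge> 0)"

definition contraction :: "('n::finite) cmat \<Rightarrow> bool" where
  "contraction A \<longleftrightarrow> op_norm A \<le> 1"

fun mpow :: "('n::finite) cmat \<Rightarrow> nat \<Rightarrow> ('n::finite) cmat" where
  "mpow A 0 = mat 1"
| "mpow A (Suc k) = A ** mpow A k"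

definition mexp :: "('n::finite) cmat \<Rightarrow> ('n::finite) cmat" where
  "mexp A = (\<Sum>k. (1 / fact k) *\<^sub>R mpow A k)"

definition Hinf_op :: "(complex \<Rightarrow> ('n::finite) cmat) \<Rightarrow> bool" where
  "Hinf_op \<psi> \<longleftrightarrow> (\<forall>i j. (\<lambda>z. \<psi> z $ i $ j) holomorphic_on unit_disc) \<and>
     (\<exists>C. \<forall>z\<in>unit_disc. op_norm (\<psi> z) \<le> C)"

definition classC :: "(complex \<Rightarrow> ('n::finite) cmat) set" where
  "classC = {\<psi>. Hinf_op \<psi> \<and> (\<forall>z\<in>unit_disc. op_norm (\<psi> z) \<le> 1) \<and>
      (\<forall>z\<in>unit_disc. \<forall>x. \<psi> z *v x = x \<longrightarrow> x = 0)}"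

text \<open>phi_t applied (via functional calculus) to an operator:
  exp (t (L + I)(L - I)^{-1})\<close>
definition phi_op :: "real \<Rightarrow> ('n::finite) cmat \<Rightarrow> ('n::finite) cmat" where
  "phi_op t L = mexp (cscale (complex_of_real t) ((L + mat 1) ** matrix_inv (L - mat 1)))"

definition phi_comp :: "real \<Rightarrow> (complex \<Rightarrow> ('n::finite) cmat) \<Rightarrow> complex \<Rightarrow> ('n::finite) cmat" where
  "phi_comp t \<psi> = (\<lambda>z. phi_op t (\<psi> z))"

definition zfun :: "complex \<Rightarrow> ('n::finite) cmat" where
  "zfun w = mat w"

definition hardy2 :: "(complex \<Rightarrow> complex ^ ('n::finite)) set" where
  "hardy2 = {f. (\<forall>i. (\<lambda>z. f z $ i) holomorphic_on unit_disc) \<and>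
     (\<exists>C. \<forall>r. 0 \<le> r \<and> r < 1 \<longrightarrow>
        (\<lambda>\<theta>. (norm (f (complex_of_real r * cis \<theta>)))\<^sup>2) integrable_on {0..2*pi} \<and>
        integral {0..2*pi} (\<lambda>\<theta>. (norm (f (complex_of_real r * cis \<theta>)))\<^sup>2) \<le> C)}"

definition mult_op :: "(complex \<Rightarrow> ('n::finite) cmat) \<Rightarrow> (complex \<Rightarrow> complex ^ ('n::finite)) \<Rightarrow> (complex \<Rightarrow> complex ^ ('n::finite))" where
  "mult_op \<psi> f = (\<lambda>z. \<psi> z *v f z)"

text \<open>equality of two operators on H^2 (elements of H^2 are functions on the disc)\<close>
definition H2_op_eq :: "((complex \<Rightarrow> complex ^ ('n::finite)) \<Rightarrow> (complex \<Rightarrow> complex ^ ('n::finite)))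
    \<Rightarrow> ((complex \<Rightarrow> complex ^ ('n::finite)) \<Rightarrow> (complex \<Rightarrow> complex ^ ('n::finite))) \<Rightarrow> bool" where
  "H2_op_eq S T \<longleftrightarrow> (\<forall>f\<in>hardy2. \<forall>z\<in>unit_disc. S f z = T f z)"

text \<open>M_{phi_t o psi_1} ... M_{phi_t o psi_n} (tuple indexed by 1..n)\<close>
definition mult_chain :: "real \<Rightarrow> (nat \<Rightarrow> complex \<Rightarrow> ('n::finite) cmat) \<Rightarrow> nat
    \<Rightarrow> (complex \<Rightarrow> complex ^ ('n::finite)) \<Rightarrow> (complex \<Rightarrow> complex ^ ('n::finite))" where
  "mult_chain t \<psi> n = foldr (\<lambda>j T. mult_op (phi_comp t (\<psi> j)) \<circ> T) [1..<Suc n] id"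

definition factorizing_tuple :: "nat \<Rightarrow> (nat \<Rightarrow> complex \<Rightarrow> ('n::finite) cmat) \<Rightarrow> bool" where
  "factorizing_tuple n \<psi> \<longleftrightarrow>
     (\<forall>j\<in>{1..n}. \<psi> j \<in> classC) \<and>
     (\<forall>j\<in>{1..n}. \<forall>k\<in>{1..n}. \<forall>t\<ge>0.
        H2_op_eq (mult_op (phi_comp t (\<psi> j)) \<circ> mult_op (phi_comp t (\<psi> k)))
                 (mult_op (phi_comp t (\<psi> k)) \<circ> mult_op (phi_comp t (\<psi> j)))) \<and>
     (\<forall>t\<ge>0. H2_op_eq (mult_chain t \<psi> n) (mult_op (phi_comp t zfun)))"

definition AB_conditions :: "nat \<Rightarrow> (nat \<Rightarrow> complex \<Rightarrow> ('n::finite) cmat) \<Rightarrow> (nat \<Rightarrow> ('n::finite) cmat) \<Rightarrow> (nat \<Rightarrow> ('n::finite) cmat) \<Rightarrow> bool" where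
  "AB_conditions n \<psi> A B \<longleftrightarrow>
     (\<forall>j\<in>{1..n}. self_adjoint (A j) \<and> positive_op (B j) \<and> contraction (B j)) \<and>
     (\<forall>j\<in>{1..n}. \<forall>k\<in>{1..n}. A j ** A k = A k ** A j \<and> B j ** B k = B k ** B j) \<and>
     (\<forall>j\<in>{1..n}. \<forall>k\<in>{1..n}. A j ** B k + B j ** A k = A k ** B j + B k ** A j) \<and>
     (\<Sum>j\<in>{1..n}. A j) = 0 \<and> (\<Sum>j\<in>{1..n}. B j) = mat 1 \<and>
     (\<forall>z\<in>unit_disc. \<forall>j\<in>{1..n}.
        (\<psi> j z + mat 1) ** matrix_inv (\<psi> j z - mat 1) = cscale \<i> (A j) + cscale (zeta z) (B j))"


end

theory Submission
  imports Defs "HOL-Complex_Analysis.Complex_Analysis"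
begin


lemma circ_coeff:
  fixes h :: "complex \<Rightarrow> complex" and r :: real and k :: nat
  assumes hol: "h holomorphic_on ball 0 1" and r: "0 < r" "r < 1"
  shows "((\<lambda>t. h (r * cis t) * cis (- (real k * t))) has_integral
            (2 * pi * ((deriv ^^ k) h 0 / fact k) * r ^ k)) {0..2*pi}"
proof -
  have sub: "cball 0 r \<subseteq> ball (0::complex) 1" using r by auto
  have cont: "continuous_on (cball 0 r) h"
    using holomorphic_on_imp_continuous_on[OF holomorphic_on_subset[OF hol sub]] .
  have holr: "h holomorphic_on ball 0 r"
    using holomorphic_on_subset[OF hol] sub ball_subset_cball by blast
  have "((\<lambda>u. h u / (u - 0) ^ (Suc k)) has_contour_integral ((2 * pi * \<i>) / (fact k) * (deriv ^^ k) h 0))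
           (circlepath 0 r)"
    by (rule Cauchy_has_contour_integral_higher_derivative_circlepath[OF cont holr]) (use r in auto)
  then have I: "((\<lambda>t. h (0 + r * cis t) / (0 + r * cis t - 0) ^ Suc k * r * \<i> * cis t) has_integral
         ((2 * pi * \<i>) / (fact k) * (deriv ^^ k) h 0)) {0..2*pi}"
    unfolding circlepath_def by (subst (asm) has_contour_integral_part_circlepath_iff) auto
  note I2 = has_integral_mult_right[OF I, of "of_real (r ^ k) / \<i>"]
  show ?thesis
  proof (rule has_integral_eq_rhs[OF has_integral_cong[THEN iffD1, OF _ I2]])
    fix t :: real
    have "cis t ^ k = cis (real k * t)" by (rule Complex.DeMoivre)
    moreover have "cis (- (real k * t)) * cis (real k * t) = 1"
      apply (subst Complex.cis_mult) by simp
    ultimately show "of_real (r ^ k) / \<i> * (h (0 + r * cis t) / (0 + r * cis t - 0) ^ Suc k * r * \<i> * cis t)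
       = h (r * cis t) * cis (- (real k * t))"
      using r by (simp add: field_simps power_mult_distrib)
  qed (simp add: field_simps)
qed

lemma circ_zero:
  fixes h :: "complex \<Rightarrow> complex" and r :: real and k :: nat
  assumes hol: "h holomorphic_on ball 0 1" and r: "0 < r" "r < 1" and k: "k \<ge> 1"
  shows "((\<lambda>t. h (r * cis t) * cis (real k * t)) has_integral 0) {0..2*pi}"
proof -
  define g where "g = (\<lambda>w. h w * w ^ k)"
  have holg: "g holomorphic_on ball 0 1" unfolding g_def by (intro holomorphic_intros hol)
  have sub: "cball 0 r \<subseteq> ball (0::complex) 1" using r by auto
  have cont: "continuous_on (cball 0 r) g"
    using holomorphic_on_imp_continuous_on[OF holomorphic_on_subset[OF holg sub]] .
  have holr: "g holomorphic_on ball 0 r"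
    using holomorphic_on_subset[OF holg] sub ball_subset_cball by blast
  have "((\<lambda>u. g u / (u - 0) ^ (Suc 0)) has_contour_integral ((2 * pi * \<i>) / (fact 0) * (deriv ^^ 0) g 0))
           (circlepath 0 r)"
    by (rule Cauchy_has_contour_integral_higher_derivative_circlepath[OF cont holr]) (use r in auto)
  note C = this
  have I: "((\<lambda>t. g (0 + r * cis t) / (0 + r * cis t - 0) ^ Suc 0 * r * \<i> * cis t) has_integral
         0) {0..2*pi}"
  proof -
    have "(0::complex) ^ k = 0" using k by simp
    then show ?thesis using C unfolding circlepath_def
      by (subst (asm) has_contour_integral_part_circlepath_iff) (auto simp: g_def power_0_left)
  qed
  note I2 = has_integral_mult_right[OF I, of "1 / (\<i> * of_real (r ^ k))"]
  show ?thesis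
  proof (rule has_integral_eq_rhs[OF has_integral_cong[THEN iffD1, OF _ I2]])
    fix t :: real
    have "cis t ^ k = cis (real k * t)" by (rule Complex.DeMoivre)
    then show "1 / (\<i> * of_real (r ^ k)) * (g (0 + r * cis t) / (0 + r * cis t - 0) ^ Suc 0 * r * \<i> * cis t)
       = h (r * cis t) * cis (real k * t)"
      using r by (simp add: g_def field_simps power_mult_distrib)
  qed simp
qed

lemma carath_r:
  fixes h :: "complex \<Rightarrow> complex" and r :: real and k :: nat
  assumes hol: "h holomorphic_on ball 0 1" and r: "0 < r" "r < 1" and k: "k \<ge> 1"
    and pos: "\<And>z. z \<in> ball 0 1 \<Longrightarrow> Re (h z) \<ge> 0"
  shows "norm ((deriv ^^ k) h 0 / fact k) * r ^ k \<le> 2 * Re (h 0)"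
proof -
  define b where "b = (deriv ^^ k) h 0 / fact k"
  define H where "H = (\<lambda>t::real. h (r * cis t))"
  define e where "e = (\<lambda>t::real. cis (- (real k * t)))"
  define e' where "e' = (\<lambda>t::real. cis (real k * t))"
  have Ik: "((\<lambda>t. H t * e t) has_integral (2 * pi * b * r ^ k)) {0..2*pi}"
    using circ_coeff[OF hol r, of k] unfolding H_def e_def b_def by simp
  have I0: "(H has_integral (2 * pi * h 0)) {0..2*pi}"
    using circ_coeff[OF hol r, of 0] unfolding H_def by simp
  have Zk: "((\<lambda>t. H t * e' t) has_integral 0) {0..2*pi}"
    using circ_zero[OF hol r k] unfolding H_def e'_def by simp
  have cI0: "((\<lambda>t. cnj (H t)) has_integral cnj (2 * pi * h 0)) {0..2*pi}"
    using has_integral_cnj[of H "2 * pi * h 0" "{0..2*pi}"] I0 by (simp only: o_def)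
  have cIk: "((\<lambda>t. cnj (H t * e t)) has_integral cnj (2 * pi * b * r ^ k)) {0..2*pi}"
    using has_integral_cnj[of "\<lambda>t. H t * e t" "2 * pi * b * r ^ k" "{0..2*pi}"] Ik by (simp only: o_def)
  have cZk: "((\<lambda>t. cnj (H t * e' t)) has_integral 0) {0..2*pi}"
    using has_integral_cnj[of "\<lambda>t. H t * e' t" 0 "{0..2*pi}"] Zk by (simp only: o_def complex_cnj_zero)
  have main: "2 * pi * Re (h 0) + pi * Re (a * b * r ^ k) \<ge> 0" if a: "norm a = 1" for a
  proof -
    define G where "G = (\<lambda>t. (H t + cnj (H t)) / 2 + a / 4 * (H t * e t + cnj (H t * e' t))
        + cnj a / 4 * (H t * e' t + cnj (H t * e t)))"
    have GI: "(G has_integral ((2 * pi * h 0 + cnj (2 * pi * h 0)) / 2 + a / 4 * (2 * pi * b * r ^ k + 0)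
        + cnj a / 4 * (0 + cnj (2 * pi * b * r ^ k)))) {0..2*pi}"
      unfolding G_def
      by (intro has_integral_add has_integral_mult_right has_integral_divide I0 cI0 Ik cIk Zk cZk)
    have Gr: "G t = of_real (Re (H t) * (1 + Re (a * e t)))" for t
    proof -
      have ce: "cnj (e t) = e' t" unfolding e_def e'_def by (simp add: cis_cnj)
      have "G t = (H t + cnj (H t)) / 2 * (1 + (a * e t + cnj (a * e t)) / 2)"
        unfolding G_def using ce[symmetric] by (simp add: algebra_simps add_divide_distrib)
      also have "\<dots> = of_real (Re (H t)) * (1 + of_real (Re (a * e t)))"
        unfolding complex_add_cnj by simp
      finally show ?thesis by simp
    qed
    note Rint = has_integral_linear[OF GI bounded_linear_Re]
    have nn: "0 \<le> Re ((2 * pi * h 0 + cnj (2 * pi * h 0)) / 2 + a / 4 * (2 * pi * b * r ^ k + 0)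
        + cnj a / 4 * (0 + cnj (2 * pi * b * r ^ k)))"
    proof (rule has_integral_nonneg[OF Rint])
      fix t assume "t \<in> {0..2*pi}"
      have "r * cis t \<in> ball 0 1" using r by (simp add: norm_mult)
      then have "Re (H t) \<ge> 0" unfolding H_def using pos by auto
      moreover have "norm (a * e t) = 1" using a unfolding e_def by (simp add: norm_mult)
      then have "Re (a * e t) \<ge> -1" using abs_Re_le_cmod[of "a * e t"] by linarith
      ultimately show "0 \<le> (Re \<circ> G) t" unfolding Gr o_def by simp
    qed
    have "Re ((2 * pi * h 0 + cnj (2 * pi * h 0)) / 2 + a / 4 * (2 * pi * b * r ^ k + 0)
        + cnj a / 4 * (0 + cnj (2 * pi * b * r ^ k))) = 2 * pi * Re (h 0) + pi * Re (a * b * r ^ k)"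
      by (simp add: algebra_simps)
    with nn show ?thesis by linarith
  qed
  show ?thesis
  proof (cases "b = 0")
    case True
    have "Re (h 0) \<ge> 0" using pos by simp
    then show ?thesis using True b_def by simp
  next
    case False
    define a where "a = - cnj b / of_real (norm b)"
    have na: "norm a = 1" using False unfolding a_def by (simp add: norm_divide)
    have "a * b * r ^ k = - of_real (norm b * r ^ k)"
      proof -
      have "b * cnj b = of_real (norm b) * of_real (norm b)"
        using complex_norm_square[of b] unfolding power2_eq_square of_real_mult by (rule sym)
      then show ?thesis using False unfolding a_def by (simp add: field_simps)
    qed
    then have Re_eq: "Re (a * b * r ^ k) = - (norm b * r ^ k)" by simp
    have "0 \<le> 2 * pi * Re (h 0) + pi * (- (norm b * r ^ k))"
      using main[OF na] unfolding Re_eq .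
    moreover have "2 * pi * Re (h 0) + pi * (- (norm b * r ^ k)) = pi * (2 * Re (h 0) - norm b * r ^ k)"
      by (simp add: algebra_simps)
    ultimately have "pi * (2 * Re (h 0) - norm b * r ^ k) \<ge> 0" by simp
    then have "norm b * r ^ k \<le> 2 * Re (h 0)"
      using pi_gt_zero by (simp add: zero_le_mult_iff)
    then show ?thesis unfolding b_def .
  qed
qed

lemma carath:
  fixes h :: "complex \<Rightarrow> complex" and k :: nat
  assumes hol: "h holomorphic_on ball 0 1" and k: "k \<ge> 1"
    and pos: "\<And>z. z \<in> ball 0 1 \<Longrightarrow> Re (h z) \<ge> 0"
  shows "norm ((deriv ^^ k) h 0 / fact k) \<le> 2 * Re (h 0)"
proof -
  let ?b = "norm ((deriv ^^ k) h 0 / fact k)"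
  have lim: "((\<lambda>r::real. ?b * r ^ k) \<longlongrightarrow> ?b * 1 ^ k) (at_left 1)"
    by (intro tendsto_intros)
  have ev: "eventually (\<lambda>r. ?b * r ^ k \<le> 2 * Re (h 0)) (at_left (1::real))"
  proof -
    have "eventually (\<lambda>r. r \<in> {0<..<1}) (at_left (1::real))"
      by (intro eventually_at_leftI[of 0]) auto
    then show ?thesis
      by eventually_elim (use carath_r[OF hol _ _ k pos] in auto)
  qed
  have "?b * 1 ^ k \<le> 2 * Re (h 0)"
    by (rule tendsto_le[OF trivial_limit_at_left_real tendsto_const lim ev])
  then show ?thesis by simp
qed

lemma aux:
  fixes q :: complex
  assumes "q \<noteq> 0"
  shows "- (fact k * (of_nat (Suc k) * q ^ k * (- 1))) / (q ^ (Suc k) * q ^ (Suc k))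
        = (fact (Suc k) :: complex) / q ^ (Suc (Suc k))"
proof -
  have "q ^ (Suc k) * q ^ (Suc k) = q ^ k * q ^ (Suc (Suc k))" by (simp add: algebra_simps)
  then show ?thesis using assms by (simp add: field_simps)
qed

lemma higher_deriv_geom:
  fixes z :: complex
  assumes "z \<noteq> 1"
  shows "(deriv ^^ k) (\<lambda>w. 1 / (1 - w)) z = fact k / (1 - z) ^ (Suc k)"
  using assms
proof (induction k arbitrary: z)
  case 0
  then show ?case by simp
next
  case (Suc k)
  have ev: "eventually (\<lambda>w. (deriv ^^ k) (\<lambda>w. 1 / (1 - w)) w = fact k / (1 - w) ^ (Suc k)) (nhds z)"
  proof -
    have "eventually (\<lambda>w. w \<noteq> 1) (nhds z)"
      using Suc.prems by (intro t1_space_nhds) auto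
    then show ?thesis by eventually_elim (use Suc.IH in auto)
  qed
  have d: "((\<lambda>w. fact k / (1 - w) ^ (Suc k)) has_field_derivative fact (Suc k) / (1 - z) ^ (Suc (Suc k))) (at z)"
  proof -
    have nz: "1 - z \<noteq> 0" using Suc.prems by simp
    have "((\<lambda>w. fact k / (1 - w) ^ (Suc k)) has_field_derivative
        - (fact k * (of_nat (Suc k) * (1 - z) ^ k * (- 1))) / ((1 - z) ^ (Suc k) * (1 - z) ^ (Suc k))) (at z)"
      by (rule derivative_eq_intros refl | use nz in simp)+
    moreover have "- (fact k * (of_nat (Suc k) * (1 - z) ^ k * (- 1))) / ((1 - z) ^ (Suc k) * (1 - z) ^ (Suc k))
        = (fact (Suc k) :: complex) / (1 - z) ^ (Suc (Suc k))"
      using aux[OF nz, of k] by simp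
    ultimately show ?thesis by simp
  qed
  have "(deriv ^^ Suc k) (\<lambda>w. 1 / (1 - w)) z = deriv ((deriv ^^ k) (\<lambda>w. 1 / (1 - w))) z"
    by simp
  also have "\<dots> = deriv (\<lambda>w. fact k / (1 - w) ^ (Suc k)) z"
    by (rule deriv_cong_ev[OF ev refl])
  also have "\<dots> = fact (Suc k) / (1 - z) ^ (Suc (Suc k))"
    by (rule DERIV_imp_deriv[OF d])
  finally show ?case .
qed

lemma herglotz:
  fixes h :: "complex \<Rightarrow> complex"
  assumes hol: "h holomorphic_on ball 0 1"
    and bnd: "\<And>z. z \<in> ball 0 1 \<Longrightarrow> 0 \<le> Re (h z) \<and> Re (h z) \<le> Re ((1 + z) / (1 - z))"
  shows "\<exists>(\<beta>::real) (\<gamma>::real). (0::real) \<le> \<beta> \<and> \<beta> \<le> (1::real) \<and>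
            (\<forall>z\<in>ball (0::complex) 1. h z = \<i> * of_real \<gamma> + of_real \<beta> * ((1 + z) / (1 - z)))"
proof -
  define P where "P = (\<lambda>w::complex. 2 * (1 / (1 - w)) - 1)"
  have ne1: "w \<noteq> 1" if "w \<in> ball 0 1" for w :: complex using that by (auto simp: dist_norm)
  have Peq: "P w = (1 + w) / (1 - w)" if "w \<noteq> 1" for w
    using that unfolding P_def by (simp add: field_simps)
  have holP: "P holomorphic_on ball 0 1"
    unfolding P_def by (intro holomorphic_intros) (use ne1 in auto)
  have holG: "(\<lambda>w::complex. 1 / (1 - w)) holomorphic_on ball 0 1"
    by (intro holomorphic_intros) (use ne1 in auto)
  define H where "H = (\<lambda>w. P w - h w)"
  have holH: "H holomorphic_on ball 0 1" unfolding H_def by (intro holomorphic_intros holP hol)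
  have posH: "Re (H z) \<ge> 0" if "z \<in> ball 0 1" for z
    using bnd[OF that] Peq[OF ne1[OF that]] unfolding H_def by simp
  have posh: "Re (h z) \<ge> 0" if "z \<in> ball 0 1" for z using bnd[OF that] by simp
  define b where "b = (\<lambda>k. (deriv ^^ k) h 0 / fact k)"
  define \<beta> where "\<beta> = Re (h 0)"
  define \<gamma> where "\<gamma> = Im (h 0)"
  have P0: "P 0 = 1" unfolding P_def by simp
  have bk: "b k = 2 * \<beta>" if k: "k \<ge> 1" for k
  proof -
    have dP: "(deriv ^^ k) P 0 = 2 * fact k"
    proof -
      have "(deriv ^^ k) P 0 = (deriv ^^ k) (\<lambda>w. 2 * (1 / (1 - w))) 0 - (deriv ^^ k) (\<lambda>w. 1) 0"
        unfolding P_def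
        by (rule higher_deriv_diff[of _ "ball 0 1"]) (auto intro!: holomorphic_intros simp: ne1)
      also have "\<dots> = 2 * (deriv ^^ k) (\<lambda>w. 1 / (1 - w)) 0"
        using k by (subst higher_deriv_cmult[OF holG]) auto
      also have "\<dots> = 2 * fact k" by (subst higher_deriv_geom) auto
      finally show ?thesis .
    qed
    have "(deriv ^^ k) H 0 = (deriv ^^ k) P 0 - (deriv ^^ k) h 0"
      unfolding H_def by (rule higher_deriv_diff[OF holP hol]) auto
    then have dH: "(deriv ^^ k) H 0 / fact k = 2 - b k"
      unfolding b_def dP by (simp add: field_simps)
    have c1: "norm (b k) \<le> 2 * \<beta>"
      using carath[OF hol k posh] unfolding b_def \<beta>_def .
    have c2: "norm (2 - b k) \<le> 2 * Re (H 0)"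
      using carath[OF holH k posH] unfolding dH .
    have "Re (H 0) = 1 - \<beta>" unfolding H_def P0 \<beta>_def by simp
    with c2 have c2': "norm (2 - b k) \<le> 2 - 2 * \<beta>" by simp
    have "Re (2 - b k) \<le> norm (2 - b k)" by (rule complex_Re_le_cmod)
    then have reb: "Re (b k) \<ge> 2 * \<beta>" using c2' by simp
    have "Re (b k) \<le> norm (b k)" by (rule complex_Re_le_cmod)
    with c1 reb have eqs: "Re (b k) = 2 * \<beta>" "norm (b k) = 2 * \<beta>" by linarith+
    have "(norm (b k))\<^sup>2 = (Re (b k))\<^sup>2 + (Im (b k))\<^sup>2" by (rule cmod_power2)
    with eqs have "(Im (b k))\<^sup>2 = 0" by simp
    then have "Im (b k) = 0" by simp
    with eqs show ?thesis by (simp add: complex_eq_iff)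
  qed
  have "0 \<le> \<beta>" unfolding \<beta>_def using posh[of 0] by simp
  moreover have "\<beta> \<le> 1" using posH[of 0] unfolding H_def P0 \<beta>_def by simp
  moreover have "\<forall>z\<in>ball (0::complex) 1. h z = \<i> * \<gamma> + \<beta> * ((1 + z) / (1 - z))"
  proof
    fix z :: complex assume z: "z \<in> ball 0 1"
    have s1: "(\<lambda>k. b k * z ^ k) sums h z"
      using holomorphic_power_series[OF hol z] unfolding b_def by simp
    have nz: "norm z < 1" using z by simp
    have "(\<lambda>k. (2 * \<beta>) * z ^ k) sums ((2 * \<beta>) * (1 / (1 - z)))"
      by (intro sums_mult geometric_sums nz)
    moreover have "(\<lambda>k. if k = 0 then h 0 - 2 * \<beta> else 0) sums (h 0 - 2 * \<beta>)"
      by (rule sums_single[where i=0, simplified])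
    ultimately have s2: "(\<lambda>k. (2 * \<beta>) * z ^ k + (if k = 0 then h 0 - 2 * \<beta> else 0)) sums
        ((2 * \<beta>) * (1 / (1 - z)) + (h 0 - 2 * \<beta>))"
      by (rule sums_add)
    have "(\<lambda>k. b k * z ^ k) = (\<lambda>k. (2 * \<beta>) * z ^ k + (if k = 0 then h 0 - 2 * \<beta> else 0))"
    proof
      fix k show "b k * z ^ k = (2 * \<beta>) * z ^ k + (if k = 0 then h 0 - 2 * \<beta> else 0)"
        using bk[of k] by (cases "k = 0") (auto simp: b_def)
    qed
    with s1 s2 have "h z = (2 * \<beta>) * (1 / (1 - z)) + (h 0 - 2 * \<beta>)"
      using sums_unique2 by metis
    moreover have "h 0 = \<i> * \<gamma> + \<beta>" unfolding \<beta>_def \<gamma>_def by (simp add: complex_eq_iff)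
    ultimately show "h z = \<i> * \<gamma> + \<beta> * ((1 + z) / (1 - z))"
      using ne1[OF z] by (simp add: field_simps)
  qed
  ultimately show ?thesis apply - apply (rule exI[of _ \<beta>]) apply (rule exI[of _ \<gamma>]) by blast
qed



lemma mmult_nth: "(A ** B) $ i $ j = (\<Sum>k\<in>UNIV. A $ i $ k * B $ k $ j)"
  by (simp add: matrix_matrix_mult_def)

lemma mat_nth: "(mat c :: 'a::zero ^'n^'n) $ i $ j = (if i = j then c else 0)"
  by (simp add: mat_def)

lemma matrix_add_rdistrib': "((A + B) ** C) = (A ** C) + (B ** C)" for A B C :: "'a::semiring_1^'n^'n"
  by (simp add: vec_eq_iff mmult_nth distrib_right sum.distrib)

lemma matrix_diff_ldistrib: "(A ** (B - C)) = (A ** B) - (A ** C)" for A B C :: "'a::ring_1^'n^'n"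
  by (simp add: vec_eq_iff mmult_nth right_diff_distrib sum_subtractf)

lemma matrix_diff_rdistrib: "((A - B) ** C) = (A ** C) - (B ** C)" for A B C :: "'a::ring_1^'n^'n"
  by (simp add: vec_eq_iff mmult_nth left_diff_distrib sum_subtractf)

lemma cscale_nth[simp]: "cscale c A $ i $ j = c * A $ i $ j"
  by (simp add: cscale_def)

lemma cscale_mult_left: "cscale c A ** B = cscale c (A ** B)"
  by (simp add: vec_eq_iff mmult_nth sum_distrib_left mult.assoc)

lemma cscale_mult_right: "A ** cscale c B = cscale c (A ** B)"
  by (simp add: vec_eq_iff mmult_nth sum_distrib_left algebra_simps)

lemma cscale_cscale: "cscale a (cscale b A) = cscale (a * b) A"
  by (simp add: vec_eq_iff)

lemma cscale_add: "cscale c (A + B) = cscale c A + cscale c B"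
  by (simp add: vec_eq_iff algebra_simps)

lemma cscale_diff: "cscale c (A - B) = cscale c A - cscale c B"
  by (simp add: vec_eq_iff algebra_simps)

lemma cscale_add_left: "cscale (a + b) A = cscale a A + cscale b A"
  by (simp add: vec_eq_iff algebra_simps)

lemma cscale_one[simp]: "cscale 1 A = A"
  by (simp add: vec_eq_iff)

lemma cscale_zero[simp]: "cscale 0 A = 0" "cscale c 0 = 0"
  by (simp_all add: vec_eq_iff)

lemma scaleR_cscale: "r *\<^sub>R A = cscale (of_real r) A" for A :: "'n::finite cmat"
  by (simp add: vec_eq_iff) (simp add: scaleR_conv_of_real)

lemma cscale_sum: "cscale c (sum f S) = sum (\<lambda>x. cscale c (f x)) S"
  by (simp add: vec_eq_iff sum_distrib_left sum_component)

subsection \<open>An entrywise l1 norm\<close>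

definition mn :: "'n::finite cmat \<Rightarrow> real" where
  "mn A = (\<Sum>i\<in>UNIV. \<Sum>j\<in>UNIV. norm (A $ i $ j))"

lemma mn_nonneg: "mn A \<ge> 0"
  unfolding mn_def by (intro sum_nonneg) auto

lemma mn_entry: "norm (A $ i $ j) \<le> mn A"
proof -
  have "norm (A $ i $ j) \<le> (\<Sum>j\<in>UNIV. norm (A $ i $ j))"
    by (rule member_le_sum) auto
  also have "\<dots> \<le> mn A" unfolding mn_def
    by (rule member_le_sum[where f = "\<lambda>i. \<Sum>j\<in>UNIV. norm (A $ i $ j)"]) (auto intro: sum_nonneg)
  finally show ?thesis .
qed

lemma mn_row: "(\<Sum>j\<in>UNIV. norm (A $ i $ j)) \<le> mn A"
  unfolding mn_def
  by (rule member_le_sum[where f = "\<lambda>i. \<Sum>j\<in>UNIV. norm (A $ i $ j)"]) (auto intro: sum_nonneg)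

lemma mn_add: "mn (A + B) \<le> mn A + mn B"
  unfolding mn_def by (simp add: sum.distrib[symmetric] sum_mono norm_triangle_ineq)

lemma mn_minus[simp]: "mn (- A) = mn A"
  unfolding mn_def by simp

lemma mn_diff: "mn (A - B) \<le> mn A + mn B"
  using mn_add[of A "- B"] by simp

lemma mn_cscale: "mn (cscale c A) = norm c * mn A"
  unfolding mn_def by (simp add: norm_mult sum_distrib_left)

lemma mn_zero[simp]: "mn 0 = 0"
  unfolding mn_def by simp

lemma mn_eq_0: "mn A = 0 \<Longrightarrow> A = 0"
  using mn_entry[of A] by (simp add: vec_eq_iff)

lemma mn_mult: "mn (A ** B) \<le> mn A * mn B"
proof -
  have "mn (A ** B) \<le> (\<Sum>i\<in>UNIV. \<Sum>j\<in>UNIV. \<Sum>k\<in>UNIV. norm (A $ i $ k) * norm (B $ k $ j))"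
    unfolding mn_def mmult_nth
    by (intro sum_mono) (auto intro!: order.trans[OF norm_sum] simp: norm_mult)
  also have "\<dots> = (\<Sum>i\<in>UNIV. \<Sum>k\<in>UNIV. norm (A $ i $ k) * (\<Sum>j\<in>UNIV. norm (B $ k $ j)))"
    by (simp add: sum_distrib_left) (rule sum.cong[OF refl], rule sum.swap)
  also have "\<dots> \<le> (\<Sum>i\<in>UNIV. \<Sum>k\<in>UNIV. norm (A $ i $ k) * mn B)"
    by (intro sum_mono mult_left_mono mn_row) auto
  also have "\<dots> = mn A * mn B"
    unfolding mn_def by (simp add: sum_distrib_right)
  finally show ?thesis .
qed

lemma norm_le_mn: "norm A \<le> mn A"
proof -
  have "norm A \<le> (\<Sum>i\<in>UNIV. norm (A $ i))"
    unfolding norm_vec_def by (rule L2_set_le_sum) auto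
  also have "\<dots> \<le> (\<Sum>i\<in>UNIV. \<Sum>j\<in>UNIV. norm (A $ i $ j))"
    unfolding norm_vec_def by (intro sum_mono L2_set_le_sum) auto
  finally show ?thesis unfolding mn_def .
qed

lemma continuous_mn: "continuous_on UNIV mn"
  unfolding mn_def by (intro continuous_intros)



lemma mn_sum: "mn (\<Sum>k\<in>S. g k) \<le> (\<Sum>k\<in>S. mn (g k))"
proof (induction S rule: infinite_finite_induct)
  case (insert x F)
  then show ?case using mn_add[of "g x" "sum g F"] by simp
qed simp_all

lemma mn_suminf:
  assumes "summable g" "summable (\<lambda>k. mn (g k))"
  shows "mn (suminf g) \<le> (\<Sum>k. mn (g k))"
proof -
  have "(\<lambda>N. \<Sum>k<N. g k) \<longlonglongrightarrow> suminf g"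
    using summable_LIMSEQ[OF assms(1)] .
  then have "(\<lambda>N. mn (\<Sum>k<N. g k)) \<longlonglongrightarrow> mn (suminf g)"
    by (rule continuous_on_tendsto_compose[OF continuous_mn]) auto
  then show ?thesis
  proof (rule LIMSEQ_le_const2)
    show "\<exists>N. \<forall>n\<ge>N. mn (\<Sum>k<n. g k) \<le> (\<Sum>k. mn (g k))"
    proof (intro exI allI impI)
      fix n :: nat
      have "mn (\<Sum>k<n. g k) \<le> (\<Sum>k<n. mn (g k))" by (rule mn_sum)
      also have "\<dots> \<le> (\<Sum>k. mn (g k))"
        by (rule sum_le_suminf[OF assms(2)]) (auto simp: mn_nonneg)
      finally show "mn (\<Sum>k<n. g k) \<le> (\<Sum>k. mn (g k))" .
    qed
  qed
qed

lemma mpow_cscale: "mpow (cscale c X) k = cscale (c ^ k) (mpow X k)"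
  by (induction k) (simp_all add: cscale_mult_left cscale_mult_right cscale_cscale mult.commute)

lemma mpow_one: "mpow X 1 = X"
  by simp

lemma mn_mpow: "mn (mpow X k) \<le> mn (mat 1 :: 'n::finite cmat) * mn X ^ k" for X :: "'n::finite cmat"
proof (induction k)
  case 0
  then show ?case by simp
next
  case (Suc k)
  have "mn (mpow X (Suc k)) \<le> mn X * mn (mpow X k)" using mn_mult[of X "mpow X k"] by simp
  also have "\<dots> \<le> mn X * (mn (mat 1 :: 'n::finite cmat) * mn X ^ k)"
    by (rule mult_left_mono[OF Suc mn_nonneg])
  finally show ?case by (simp add: algebra_simps)
qed

lemma summable_mexp_bound:
  fixes X :: "'n::finite cmat"
  shows "summable (\<lambda>k. mn (mat 1 :: 'n::finite cmat) * (mn X ^ k / fact k))"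
  using summable_mult[OF summable_exp[of "mn X"], of "mn (mat 1 :: 'n::finite cmat)"]
  by (simp add: field_simps)

lemma mn_mexp_term: "mn ((1 / fact k) *\<^sub>R mpow X k) \<le> mn (mat 1 :: 'n::finite cmat) * (mn X ^ k / fact k)" for X :: "'n::finite cmat"
proof -
  have "mn ((1 / fact k) *\<^sub>R mpow X k) = (1 / fact k) * mn (mpow X k)"
    by (simp add: scaleR_cscale mn_cscale norm_divide)
  also have "\<dots> \<le> (1 / fact k) * (mn (mat 1 :: 'n::finite cmat) * mn X ^ k)"
    by (intro mult_left_mono mn_mpow) auto
  finally show ?thesis by simp
qed

lemma summable_mexp: "summable (\<lambda>k. (1 / fact k) *\<^sub>R mpow (X :: 'n::finite cmat) k)"
proof (rule summable_comparison_test[OF _ summable_mexp_bound[of X]])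
  show "\<exists>N. \<forall>n\<ge>N. norm ((1 / fact n) *\<^sub>R mpow X n) \<le> mn (mat 1 :: 'n::finite cmat) * (mn X ^ n / fact n)"
    using order.trans[OF norm_le_mn mn_mexp_term] by blast
qed

definition bigO :: "nat \<Rightarrow> (real \<Rightarrow> 'n::finite cmat) \<Rightarrow> bool" where
  "bigO m R \<longleftrightarrow> (\<exists>C. \<forall>t\<in>{0..1}. mn (R t) \<le> C * t ^ m)"

lemma bigO_add: "bigO m A \<Longrightarrow> bigO m B \<Longrightarrow> bigO m (\<lambda>t. A t + B t)"
  unfolding bigO_def
proof (elim exE)
  fix C D assume C: "\<forall>t\<in>{0..1}. mn (A t) \<le> C * t ^ m" and D: "\<forall>t\<in>{0..1}. mn (B t) \<le> D * t ^ m"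
  show "\<exists>C. \<forall>t\<in>{0..1}. mn (A t + B t) \<le> C * t ^ m"
  proof (intro exI ballI)
    fix t :: real assume t: "t \<in> {0..1}"
    show "mn (A t + B t) \<le> (C + D) * t ^ m"
      using mn_add[of "A t" "B t"] C[rule_format, OF t] D[rule_format, OF t] by (simp add: algebra_simps)
  qed
qed

lemma bigO_minus: "bigO m A \<Longrightarrow> bigO m (\<lambda>t. - A t)"
  unfolding bigO_def by simp

lemma bigO_diff: "bigO m A \<Longrightarrow> bigO m B \<Longrightarrow> bigO m (\<lambda>t. A t - B t)"
  using bigO_add[of m A "\<lambda>t. - B t"] bigO_minus[of m B] by simp

lemma bigO_mult: "bigO a A \<Longrightarrow> bigO b B \<Longrightarrow> bigO (a + b) (\<lambda>t. A t ** B t)"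
  unfolding bigO_def
proof (elim exE)
  fix C D assume C: "\<forall>t\<in>{0..1}. mn (A t) \<le> C * t ^ a" and D: "\<forall>t\<in>{0..1}. mn (B t) \<le> D * t ^ b"
  show "\<exists>C. \<forall>t\<in>{0..1}. mn (A t ** B t) \<le> C * t ^ (a + b)"
  proof (intro exI ballI)
    fix t :: real assume t: "t \<in> {0..1}"
    have "mn (A t ** B t) \<le> mn (A t) * mn (B t)" by (rule mn_mult)
    also have "\<dots> \<le> (C * t ^ a) * (D * t ^ b)"
      using C[rule_format, OF t] D[rule_format, OF t] by (intro mult_mono) (auto simp: mn_nonneg intro: order.trans[OF mn_nonneg])
    finally show "mn (A t ** B t) \<le> (C * D) * t ^ (a + b)" by (simp add: power_add algebra_simps)
  qed
qed

lemma bigO_const: "bigO 0 (\<lambda>t. A)"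
  unfolding bigO_def by (intro exI[of _ "mn A"]) simp

lemma bigO_cscale_pow: "bigO m (\<lambda>t. cscale (of_real (t ^ m)) A)"
  unfolding bigO_def
  by (intro exI[of _ "mn A"]) (auto simp: mn_cscale norm_power abs_of_nonneg)

lemma bigO_mono: "bigO m A \<Longrightarrow> k \<le> m \<Longrightarrow> bigO k A"
  unfolding bigO_def
proof (elim exE)
  fix C assume C: "\<forall>t\<in>{0..1}. mn (A t) \<le> C * t ^ m" and km: "k \<le> m"
  show "\<exists>C. \<forall>t\<in>{0..1}. mn (A t) \<le> C * t ^ k"
  proof (intro exI ballI)
    fix t :: real assume t: "t \<in> {0..1}"
    have "t ^ m \<le> t ^ k" using t km by (intro power_decreasing) auto
    then have "C * t ^ m \<le> max C 0 * t ^ k"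
    proof -
      have "C * t ^ m \<le> max C 0 * t ^ m" using t by (intro mult_right_mono) auto
      also have "\<dots> \<le> max C 0 * t ^ k" by (intro mult_left_mono \<open>t ^ m \<le> t ^ k\<close>) auto
      finally show ?thesis .
    qed
    then show "mn (A t) \<le> max C 0 * t ^ k" using C[rule_format, OF t] by linarith
  qed
qed

lemma bigO_zero:
  assumes "bigO (Suc m) (\<lambda>t. cscale (of_real (t ^ m)) D)"
  shows "D = 0"
proof -
  obtain C where C: "\<forall>t\<in>{0..1}. mn (cscale (of_real (t ^ m)) D) \<le> C * t ^ Suc m"
    using assms unfolding bigO_def by blast
  have le: "mn D \<le> C * t" if t: "0 < t" "t \<le> 1" for t
  proof -
    have nt: "norm (complex_of_real (t ^ m)) = t ^ m" using t by (simp add: norm_power)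
    have "t ^ m * mn D \<le> t ^ m * (C * t)"
      using C[rule_format, of t] t unfolding mn_cscale nt by (simp add: algebra_simps)
    moreover have "t ^ m > 0" using t by simp
    ultimately show ?thesis by (simp add: mult_le_cancel_left)
  qed
  have "mn D \<le> 0"
  proof (rule ccontr)
    assume "\<not> mn D \<le> 0"
    then have pos: "mn D > 0" by simp
    define t where "t = min 1 (mn D / (2 * (\<bar>C\<bar> + 1)))"
    have t0: "0 < t" "t \<le> 1" unfolding t_def using pos by (auto simp: min_def)
    have "C * t \<le> \<bar>C\<bar> * t" using t0 by (simp add: mult_right_mono)
    also have "\<dots> \<le> (\<bar>C\<bar> + 1) * (mn D / (2 * (\<bar>C\<bar> + 1)))"
      using t0 by (intro mult_mono) (auto simp: t_def)
    also have "\<dots> = mn D / 2" by (simp add: field_simps)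
    finally show False using le[OF t0] pos by linarith
  qed
  then have "mn D = 0" using mn_nonneg[of D] by linarith
  then show ?thesis by (rule mn_eq_0)
qed

lemma mn_term_cscale:
  assumes "t \<ge> 0"
  shows "mn ((1 / fact k) *\<^sub>R mpow (cscale (of_real t) X) k) = (1 / fact k) * (t ^ k * mn (mpow X k))"
proof -
  have "norm (complex_of_real t ^ k) = t ^ k" using assms by (simp add: norm_power)
  then show ?thesis unfolding scaleR_cscale mn_cscale mpow_cscale by (simp add: norm_divide)
qed

lemma mexp_expansion:
  fixes X :: "'n::finite cmat"
  shows "bigO 2 (\<lambda>t. mexp (cscale (of_real t) X) - (mat 1 + cscale (of_real t) X))"
proof -
  let ?c = "mn (mat 1 :: 'n cmat)"
  define M where "M = mn X"
  define C where "C = (\<Sum>i. ?c * (M ^ (i + 2) / fact (i + 2)))"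
  have sumC: "summable (\<lambda>i. ?c * (M ^ (i + 2) / fact (i + 2)))"
    using summable_ignore_initial_segment[OF summable_mexp_bound[of X], of 2] unfolding M_def .
  show ?thesis
    unfolding bigO_def
  proof (intro exI[of _ C] ballI)
    fix t :: real assume t: "t \<in> {0..1}"
    define Y where "Y = cscale (of_real t) X"
    define f where "f = (\<lambda>k. (1 / fact k) *\<^sub>R mpow Y k)"
    have "f sums mexp Y" unfolding f_def mexp_def using summable_mexp[of Y] by (rule summable_sums)
    from sums_split_initial_segment[OF this, of 2]
    have s: "(\<lambda>i. f (i + 2)) sums (mexp Y - (mat 1 + Y))"
      by (simp add: f_def numeral_2_eq_2)
    have bnd: "mn (f (i + 2)) \<le> t ^ 2 * (?c * (M ^ (i + 2) / fact (i + 2)))" for i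
    proof -
      have "mn (f (i + 2)) = (1 / fact (i + 2)) * (t ^ (i + 2) * mn (mpow X (i + 2)))"
        using t unfolding f_def Y_def by (intro mn_term_cscale) auto
      also have "\<dots> \<le> (1 / fact (i + 2)) * (t ^ 2 * (?c * M ^ (i + 2)))"
      proof (intro mult_left_mono)
        have "t ^ (i + 2) \<le> t ^ 2" using t by (intro power_decreasing) auto
        moreover have "mn (mpow X (i + 2)) \<le> ?c * M ^ (i + 2)" unfolding M_def by (rule mn_mpow)
        ultimately show "t ^ (i + 2) * mn (mpow X (i + 2)) \<le> t ^ 2 * (?c * M ^ (i + 2))"
          using t by (intro mult_mono) (auto simp: mn_nonneg)
      qed auto
      finally show ?thesis by (simp add: field_simps)
    qed
    have sum1: "summable (\<lambda>i. mn (f (i + 2)))"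
      by (rule summable_comparison_test[OF _ summable_mult[OF sumC, of "t^2"]])
         (use bnd in \<open>auto simp: mn_nonneg\<close>)
    have "mn (mexp Y - (mat 1 + Y)) = mn (\<Sum>i. f (i + 2))" using sums_unique[OF s] by simp
    also have "\<dots> \<le> (\<Sum>i. mn (f (i + 2)))"
      by (rule mn_suminf[OF sums_summable[OF s] sum1])
    also have "\<dots> \<le> (\<Sum>i. t ^ 2 * (?c * (M ^ (i + 2) / fact (i + 2))))"
      by (rule suminf_le[OF bnd sum1 summable_mult[OF sumC]])
    also have "\<dots> = C * t ^ 2" unfolding C_def using suminf_mult[OF sumC, of "t^2"] by simp
    finally show "mn (mexp (cscale (of_real t) X) - (mat 1 + cscale (of_real t) X)) \<le> C * t ^ 2"
      unfolding Y_def .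
  qed
qed



lemma bigO_cscale1: "bigO 1 (\<lambda>t. cscale (of_real t) A)"
  using bigO_cscale_pow[of 1 A] by simp

lemma bigO_cong: "(\<And>t. t \<in> {0..1} \<Longrightarrow> A t = B t) \<Longrightarrow> bigO m A \<Longrightarrow> bigO m B"
  unfolding bigO_def by auto

lemma bigO_0fun: "bigO m (\<lambda>t. 0)"
  unfolding bigO_def by (intro exI[of _ 0]) simp

lemma alg1:
  fixes A U V Q :: "'n::finite cmat"
  shows "A ** (mat 1 + V + Q) - (mat 1 + (U + V)) =
    (A - (mat 1 + U)) + U ** V + (A - (mat 1 + U)) ** V + A ** Q"
  by (simp add: matrix_add_ldistrib matrix_add_rdistrib' matrix_diff_rdistrib algebra_simps)

lemma alg2:
  fixes U V P Q :: "'n::finite cmat"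
  shows "(mat 1 + U + P) ** (mat 1 + V + Q) - (mat 1 + V + Q) ** (mat 1 + U + P) =
    (U ** V - V ** U) + (U ** Q + P ** V + P ** Q - V ** P - Q ** U - Q ** P)"
  by (simp add: matrix_add_ldistrib matrix_add_rdistrib' algebra_simps)

lemma prod_expansion:
  fixes X :: "'a \<Rightarrow> 'n::finite cmat"
  shows "bigO 2 (\<lambda>t. foldr (\<lambda>j M. mexp (cscale (of_real t) (X j)) ** M) js (mat 1)
                    - (mat 1 + cscale (of_real t) (sum_list (map X js))))"
proof (induction js)
  case Nil
  then show ?case by (simp add: bigO_0fun)
next
  case (Cons j js)
  define E where "E = (\<lambda>t. mexp (cscale (of_real t) (X j)))"
  define P where "P = (\<lambda>t. foldr (\<lambda>j M. mexp (cscale (of_real t) (X j)) ** M) js (mat 1))"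
  define U where "U = (\<lambda>t::real. cscale (of_real t) (X j))"
  define V where "V = (\<lambda>t::real. cscale (of_real t) (sum_list (map X js)))"
  define Q where "Q = (\<lambda>t. P t - (mat 1 + V t))"
  have RQ: "bigO 2 Q" using Cons unfolding Q_def P_def V_def .
  have RE: "bigO 2 (\<lambda>t. E t - (mat 1 + U t))" unfolding E_def U_def by (rule mexp_expansion)
  have bU: "bigO 1 U" unfolding U_def by (rule bigO_cscale1)
  have bV: "bigO 1 V" unfolding V_def by (rule bigO_cscale1)
  have bE: "bigO 0 E"
  proof -
    have "bigO 0 (\<lambda>t. (E t - (mat 1 + U t)) + (mat 1 + U t))"
      by (intro bigO_add bigO_mono[OF RE] bigO_const bigO_mono[OF bU]) auto
    then show ?thesis by simp
  qed
  have eq: "E t ** P t - (mat 1 + cscale (of_real t) (X j + sum_list (map X js))) =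
      (E t - (mat 1 + U t)) + U t ** V t + (E t - (mat 1 + U t)) ** V t + E t ** Q t" for t
  proof -
    have "P t = mat 1 + V t + Q t" unfolding Q_def by simp
    moreover have "cscale (of_real t) (X j + sum_list (map X js)) = U t + V t"
      unfolding U_def V_def by (simp add: cscale_add)
    ultimately show ?thesis using alg1[of "E t" "V t" "Q t" "U t"] by simp
  qed
  have b1: "bigO 2 (\<lambda>t. U t ** V t)" using bigO_mult[OF bU bV] by (simp add: numeral_2_eq_2)
  have b2: "bigO 2 (\<lambda>t. E t ** Q t)" using bigO_mult[OF bE RQ] by (simp add: numeral_2_eq_2)
  have "bigO 2 (\<lambda>t. (E t - (mat 1 + U t)) + U t ** V t + (E t - (mat 1 + U t)) ** V t + E t ** Q t)"
    by (intro bigO_add RE b1 b2 bigO_mono[OF bigO_mult[OF RE bV]]) auto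
  then show ?case
  proof (rule bigO_cong[rotated])
    fix t :: real
    show "E t - (mat 1 + U t) + U t ** V t + (E t - (mat 1 + U t)) ** V t + E t ** Q t =
      foldr (\<lambda>j M. mexp (cscale (of_real t) (X j)) ** M) (j # js) (mat 1) -
      (mat 1 + cscale (of_real t) (sum_list (map X (j # js))))"
      using eq[of t] unfolding E_def P_def by simp
  qed
qed

lemma sum_from_prod:
  fixes X :: "'a \<Rightarrow> 'n::finite cmat"
  assumes "\<And>t. t \<in> {0..1} \<Longrightarrow>
     foldr (\<lambda>j M. mexp (cscale (of_real t) (X j)) ** M) js (mat 1) = mexp (cscale (of_real t) Z)"
  shows "sum_list (map X js) = Z"
proof -
  have "bigO 2 (\<lambda>t. (mexp (cscale (of_real t) Z) - (mat 1 + cscale (of_real t) Z))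
     - (foldr (\<lambda>j M. mexp (cscale (of_real t) (X j)) ** M) js (mat 1)
                    - (mat 1 + cscale (of_real t) (sum_list (map X js)))))"
    by (intro bigO_diff mexp_expansion prod_expansion)
  then have "bigO 2 (\<lambda>t. cscale (of_real (t ^ 1)) (sum_list (map X js) - Z))"
    by (rule bigO_cong[rotated]) (simp add: assms cscale_diff)
  then have "sum_list (map X js) - Z = 0" using bigO_zero[of 1 "sum_list (map X js) - Z"] by (simp add: numeral_2_eq_2)
  then show ?thesis by simp
qed

lemma comm_from_exp:
  fixes X Y :: "'n::finite cmat"
  assumes "\<And>t. t \<in> {0..1} \<Longrightarrow>
     mexp (cscale (of_real t) X) ** mexp (cscale (of_real t) Y) =
     mexp (cscale (of_real t) Y) ** mexp (cscale (of_real t) X)"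
  shows "X ** Y = Y ** X"
proof -
  define U where "U = (\<lambda>t::real. cscale (of_real t) X)"
  define V where "V = (\<lambda>t::real. cscale (of_real t) Y)"
  define P where "P = (\<lambda>t. mexp (U t) - (mat 1 + U t))"
  define Q where "Q = (\<lambda>t. mexp (V t) - (mat 1 + V t))"
  have bP: "bigO 2 P" unfolding P_def U_def by (rule mexp_expansion)
  have bQ: "bigO 2 Q" unfolding Q_def V_def by (rule mexp_expansion)
  have bU: "bigO 1 U" unfolding U_def by (rule bigO_cscale1)
  have bV: "bigO 1 V" unfolding V_def by (rule bigO_cscale1)
  have c1: "bigO 3 (\<lambda>t. U t ** Q t)" using bigO_mult[OF bU bQ] by (simp add: numeral_3_eq_3)
  have c2: "bigO 3 (\<lambda>t. P t ** V t)" using bigO_mult[OF bP bV] by (simp add: numeral_3_eq_3)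
  have c3: "bigO 3 (\<lambda>t. V t ** P t)" using bigO_mult[OF bV bP] by (simp add: numeral_3_eq_3)
  have c4: "bigO 3 (\<lambda>t. Q t ** U t)" using bigO_mult[OF bQ bU] by (simp add: numeral_3_eq_3)
  have "bigO 3 (\<lambda>t. U t ** Q t + P t ** V t + P t ** Q t - V t ** P t - Q t ** U t - Q t ** P t)"
    by (intro bigO_diff bigO_add c1 c2 c3 c4
        bigO_mono[OF bigO_mult[OF bP bQ]] bigO_mono[OF bigO_mult[OF bQ bP]]) auto
  then have "bigO 3 (\<lambda>t. - (U t ** V t - V t ** U t))"
  proof (rule bigO_cong[rotated])
    fix t :: real assume t: "t \<in> {0..1}"
    have "mexp (U t) = mat 1 + U t + P t" "mexp (V t) = mat 1 + V t + Q t"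
      unfolding P_def Q_def by simp_all
    then have "(U t ** V t - V t ** U t) +
        (U t ** Q t + P t ** V t + P t ** Q t - V t ** P t - Q t ** U t - Q t ** P t) = 0"
      using alg2[of "U t" "P t" "V t" "Q t"] assms[OF t] unfolding U_def V_def by simp
    then show "U t ** Q t + P t ** V t + P t ** Q t - V t ** P t - Q t ** U t - Q t ** P t =
        - (U t ** V t - V t ** U t)"
      by (simp only: add_eq_0_iff)
  qed
  then have "bigO 3 (\<lambda>t. cscale (of_real (t ^ 2)) (Y ** X - X ** Y))"
  proof (rule bigO_cong[rotated])
    fix t :: real
    show "- (U t ** V t - V t ** U t) = cscale (of_real (t ^ 2)) (Y ** X - X ** Y)"
      unfolding U_def V_def
      by (simp add: cscale_mult_left cscale_mult_right cscale_cscale cscale_diff power2_eq_square)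
  qed
  then have "Y ** X - X ** Y = 0" using bigO_zero[of 2 "Y ** X - X ** Y"] by (simp add: numeral_3_eq_3 numeral_2_eq_2)
  then show ?thesis by simp
qed



lemma invertible_of_inj:
  fixes A :: "'n::finite cmat"
  assumes "\<And>x. A *v x = 0 \<Longrightarrow> x = 0"
  shows "invertible A"
proof -
  have "inj ((*v) A)"
  proof (rule injI)
    fix x y assume "A *v x = A *v y"
    then have "A *v (x - y) = 0" by (simp add: matrix_vector_mult_diff_distrib)
    then show "x = y" using assms[of "x - y"] by simp
  qed
  then have "det (matrix ((*v) A)) \<noteq> 0"
    using det_nz_iff_inj_gen[OF matrix_vector_mul_linear_gen] by blast
  then show ?thesis using invertible_det_nz
    by (metis matrix_of_matrix_vector_mul)
qed

lemma matrix_inv_works: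
  assumes "invertible (A :: 'a::semiring_1^'n^'n)"
  shows "A ** matrix_inv A = mat 1" "matrix_inv A ** A = mat 1"
proof -
  obtain B where "A ** B = mat 1 \<and> B ** A = mat 1" using assms unfolding invertible_def by blast
  then have "A ** matrix_inv A = mat 1 \<and> matrix_inv A ** A = mat 1"
    unfolding matrix_inv_def by (rule someI)
  then show "A ** matrix_inv A = mat 1" "matrix_inv A ** A = mat 1" by auto
qed

lemma matrix_inv_unique:
  fixes A B :: "'a::semiring_1^'n^'n"
  assumes "A ** B = mat 1" "B ** A = mat 1"
  shows "matrix_inv A = B"
proof -
  have inv: "invertible A" using assms unfolding invertible_def by blast
  have "matrix_inv A = matrix_inv A ** (A ** B)" by (simp add: assms)
  also have "\<dots> = (matrix_inv A ** A) ** B" by (simp add: matrix_mul_assoc)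
  also have "\<dots> = B" by (simp add: matrix_inv_works[OF inv])
  finally show ?thesis .
qed

lemma matrix_inv_entry:
  fixes A :: "'n::finite cmat"
  assumes inv: "invertible A"
  shows "matrix_inv A $ k $ j = det (\<chi> i l. if l = k then (if i = j then 1 else 0) else A $ i $ l) / det A"
proof -
  have d: "det A \<noteq> 0" using inv invertible_det_nz by blast
  define x where "x = (\<chi> k. matrix_inv A $ k $ j)"
  define b :: "complex ^'n" where "b = (\<chi> i. if i = j then 1 else 0)"
  have "A *v x = b"
  proof -
    have "(A *v x) $ i = (A ** matrix_inv A) $ i $ j" for i
      unfolding x_def by (simp add: matrix_vector_mult_def mmult_nth)
    then show ?thesis unfolding matrix_inv_works[OF inv] b_def by (simp add: vec_eq_iff mat_nth)
  qed
  then have "x = (\<chi> k. det(\<chi> i l. if l = k then b $ i else A $ i $ l) / det A)"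
    using cramer[OF d] by blast
  then have "x $ k = det(\<chi> i l. if l = k then b $ i else A $ i $ l) / det A" by simp
  moreover have "(\<chi> i l. if l = k then b $ i else A $ i $ l) = (\<chi> i l. if l = k then (if i = j then 1 else 0) else A $ i $ l)"
    by (simp add: vec_eq_iff b_def)
  ultimately show ?thesis unfolding x_def by simp
qed

subsection \<open>Holomorphy of matrix functions\<close>

definition mhol :: "(complex \<Rightarrow> 'n::finite cmat) \<Rightarrow> complex set \<Rightarrow> bool" where
  "mhol M S \<longleftrightarrow> (\<forall>i j. (\<lambda>z. M z $ i $ j) holomorphic_on S)"

lemma mhol_add: "mhol M S \<Longrightarrow> mhol N S \<Longrightarrow> mhol (\<lambda>z. M z + N z) S"
  unfolding mhol_def by (auto intro!: holomorphic_intros)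

lemma mhol_diff: "mhol M S \<Longrightarrow> mhol N S \<Longrightarrow> mhol (\<lambda>z. M z - N z) S"
  unfolding mhol_def by (auto intro!: holomorphic_intros)

lemma mhol_const: "mhol (\<lambda>z. A) S"
  unfolding mhol_def by (auto intro!: holomorphic_intros)

lemma mhol_mult: "mhol M S \<Longrightarrow> mhol N S \<Longrightarrow> mhol (\<lambda>z. M z ** N z) S"
  unfolding mhol_def mmult_nth by (auto intro!: holomorphic_intros)

lemma hol_det: "mhol M S \<Longrightarrow> (\<lambda>z. det (M z)) holomorphic_on S"
  unfolding mhol_def det_def by (auto intro!: holomorphic_intros)

lemma mhol_inv:
  assumes "mhol M S" "\<And>z. z \<in> S \<Longrightarrow> invertible (M z)"
  shows "mhol (\<lambda>z. matrix_inv (M z)) S"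
  unfolding mhol_def
proof (intro allI)
  fix k j
  have h1: "(\<lambda>z. det (\<chi> i l. if l = k then (if i = j then 1 else 0) else M z $ i $ l)) holomorphic_on S"
  proof (rule hol_det)
    show "mhol (\<lambda>z. \<chi> i l. if l = k then (if i = j then 1 else 0) else M z $ i $ l) S"
      unfolding mhol_def
    proof (intro allI)
      fix i l
      show "(\<lambda>z. (\<chi> i l. if l = k then (if i = j then 1 else 0) else M z $ i $ l) $ i $ l) holomorphic_on S"
        using assms(1) unfolding mhol_def by (cases "l = k") (auto intro!: holomorphic_intros)
    qed
  qed
  have h2: "(\<lambda>z. det (M z)) holomorphic_on S" by (rule hol_det[OF assms(1)])
  have nz: "det (M z) \<noteq> 0" if "z \<in> S" for z using assms(2)[OF that] invertible_det_nz by blast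
  have "(\<lambda>z. det (\<chi> i l. if l = k then (if i = j then 1 else 0) else M z $ i $ l) / det (M z)) holomorphic_on S"
    by (intro holomorphic_on_divide h1 h2 nz)
  then show "(\<lambda>z. matrix_inv (M z) $ k $ j) holomorphic_on S"
    by (rule holomorphic_cong[THEN iffD1, rotated 2]) (auto simp: matrix_inv_entry assms(2))
qed

subsection \<open>Sesquilinear form\<close>

lemma cinner_add_left: "cinner (x + y) z = cinner x z + cinner y z"
  unfolding cinner_def by (simp add: distrib_right sum.distrib)

lemma cinner_add_right: "cinner x (y + z) = cinner x y + cinner x z"
  unfolding cinner_def by (simp add: distrib_left sum.distrib)

lemma cinner_diff_left: "cinner (x - y) z = cinner x z - cinner y z"
  unfolding cinner_def by (simp add: left_diff_distrib sum_subtractf)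

lemma cinner_diff_right: "cinner x (y - z) = cinner x y - cinner x z"
  unfolding cinner_def by (simp add: right_diff_distrib sum_subtractf)

lemma cinner_scale_left: "cinner (c *s x) y = c * cinner x y"
  unfolding cinner_def by (simp add: sum_distrib_left mult.assoc)

lemma cinner_scale_right: "cinner x (c *s y) = cnj c * cinner x y"
  unfolding cinner_def by (simp add: sum_distrib_left algebra_simps)

lemma cinner_zero_left[simp]: "cinner 0 y = 0" and cinner_zero_right[simp]: "cinner x 0 = 0"
  unfolding cinner_def by simp_all

lemma cinner_cnj: "cnj (cinner x y) = cinner y x"
  unfolding cinner_def by (simp add: mult.commute)

lemma cinner_self: "cinner x x = of_real ((norm x)\<^sup>2)"
proof -
  have "x $ i * cnj (x $ i) = of_real ((norm (x $ i))\<^sup>2)" for i by (rule complex_norm_square[symmetric])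
  then have "cinner x x = (\<Sum>i\<in>UNIV. of_real ((norm (x $ i))\<^sup>2))"
    unfolding cinner_def by simp
  also have "\<dots> = of_real (\<Sum>i\<in>UNIV. (norm (x $ i))\<^sup>2)" by simp
  also have "(\<Sum>i\<in>UNIV. (norm (x $ i))\<^sup>2) = (norm x)\<^sup>2"
    unfolding norm_vec_def L2_set_def by (simp add: sum_nonneg)
  finally show ?thesis .
qed

lemma cinner_adjoint: "cinner (A *v x) y = cinner x (adjoint_mat A *v y)"
proof -
  have "cinner (A *v x) y = (\<Sum>i\<in>UNIV. \<Sum>j\<in>UNIV. A $ i $ j * x $ j * cnj (y $ i))"
    unfolding cinner_def matrix_vector_mult_def by (simp add: sum_distrib_right)
  also have "\<dots> = (\<Sum>j\<in>UNIV. \<Sum>i\<in>UNIV. A $ i $ j * x $ j * cnj (y $ i))" by (rule sum.swap)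
  also have "\<dots> = cinner x (adjoint_mat A *v y)"
    unfolding cinner_def matrix_vector_mult_def adjoint_mat_def
    by (simp add: sum_distrib_left algebra_simps)
  finally show ?thesis .
qed

lemma mvec_cscale: "cscale c A *v x = c *s (A *v x)"
  by (simp add: vec_eq_iff matrix_vector_mult_def sum_distrib_left mult.assoc)

lemma cinner_axis: "cinner (A *v axis a 1) (axis b 1) = A $ b $ a"
  unfolding cinner_def matrix_vector_mult_def axis_def
  by (simp add: if_distrib cong: if_cong)

lemma mvec_scale: "M *v (c *s u) = c *s (M *v u)" for M :: "'n::finite cmat"
  by (simp add: vec_eq_iff matrix_vector_mult_def sum_distrib_left algebra_simps)

lemma quad_zero:
  fixes M :: "'n::finite cmat"
  assumes q: "\<And>x. cinner (M *v x) x = 0"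
  shows "M = 0"
proof -
  define B where "B = (\<lambda>u v. cinner (M *v u) v)"
  have Badd: "B (u + v) (u + v) = B u u + B u v + B v u + B v v" for u v
    unfolding B_def by (simp add: matrix_vector_right_distrib cinner_add_left cinner_add_right)
  have Bsc1: "B (c *s u) v = c * B u v" for c u v
    unfolding B_def by (simp add: cinner_scale_left mvec_scale)
  have Bsc2: "B u (c *s v) = cnj c * B u v" for c u v
    unfolding B_def by (simp add: cinner_scale_right)
  have ax: "B (axis a 1) (axis b 1) = M $ b $ a" for a b unfolding B_def by (rule cinner_axis)
  have q': "B x x = 0" for x unfolding B_def by (rule q)
  have "M $ i $ j = 0" for i j
  proof -
    let ?u = "axis j 1 :: complex^'n" and ?v = "axis i 1 :: complex^'n"
    have e1: "B ?u ?v + B ?v ?u = 0" using Badd[of ?u ?v] q'[of ?u] q'[of ?v] q'[of "?u + ?v"] by simp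
    have e2: "B ?u (\<i> *s ?v) + B (\<i> *s ?v) ?u = 0"
      using Badd[of ?u "\<i> *s ?v"] q'[of ?u] q'[of "\<i> *s ?v"] q'[of "?u + \<i> *s ?v"] by simp
    then have "- \<i> * B ?u ?v + \<i> * B ?v ?u = 0" unfolding Bsc1 Bsc2 by simp
    with e1 have "B ?u ?v = 0" by (simp add: algebra_simps)
    then show ?thesis unfolding ax .
  qed
  then show ?thesis by (simp add: vec_eq_iff)
qed



lemma adjoint_adjoint[simp]: "adjoint_mat (adjoint_mat A) = A"
  by (simp add: adjoint_mat_def vec_eq_iff)

lemma mvec_add: "(A + B) *v x = A *v x + B *v x" for A B :: "'n::finite cmat"
  by (simp add: matrix_vector_mult_add_rdistrib)

lemma mvec_diff: "(A - B) *v x = A *v x - B *v x" for A B :: "'n::finite cmat"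
  by (simp add: matrix_vector_mult_diff_rdistrib)

lemma real_quad_selfadj:
  fixes A :: "'n::finite cmat"
  assumes "\<And>x. Im (cinner (A *v x) x) = 0"
  shows "adjoint_mat A = A"
proof -
  have "cinner ((A - adjoint_mat A) *v x) x = 0" for x
  proof -
    have "cinner (adjoint_mat A *v x) x = cinner x (A *v x)"
      using cinner_adjoint[of "adjoint_mat A" x x] by simp
    also have "\<dots> = cnj (cinner (A *v x) x)" by (simp add: cinner_cnj)
    also have "\<dots> = cinner (A *v x) x" using assms[of x] by (simp add: complex_eq_iff)
    finally show ?thesis by (simp add: mvec_diff cinner_diff_left)
  qed
  then have "A - adjoint_mat A = 0" by (rule quad_zero)
  then show ?thesis by simp
qed

lemma cinner_norm: "Re (cinner x x) = (norm x)\<^sup>2" "Im (cinner x x) = 0"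
  by (simp_all add: cinner_self)

lemma cs_psd:
  fixes B :: "'n::finite cmat"
  assumes sa: "adjoint_mat B = B" and pos: "\<And>x. Re (cinner (B *v x) x) \<ge> 0"
  shows "(norm (cinner (B *v x) y))\<^sup>2 \<le> Re (cinner (B *v x) x) * Re (cinner (B *v y) y)"
proof -
  define s where "s = cinner (B *v x) y"
  define a where "a = Re (cinner (B *v x) x)"
  define b where "b = Re (cinner (B *v y) y)"
  define m where "m = (norm s)\<^sup>2"
  have syx: "cinner (B *v y) x = cnj s"
    unfolding s_def using cinner_adjoint[of B y x] sa by (simp add: cinner_cnj)
  have key: "a - 2 * r * m + r\<^sup>2 * m * b \<ge> 0" for r :: real
  proof -
    define c where "c = - (of_real r * s)"
    have E0: "cinner (B *v (x + c *s y)) (x + c *s y) =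
        cinner (B *v x) x + cnj c * s + c * cnj s + c * cnj c * cinner (B *v y) y"
      by (simp only: matrix_vector_right_distrib mvec_scale cinner_add_left cinner_add_right
          cinner_scale_left cinner_scale_right syx s_def[symmetric]) (simp add: algebra_simps)
    have sc: "s * cnj s = of_real m" unfolding m_def by (rule complex_norm_square[symmetric])
    have e1: "c * cnj s = - of_real (r * m)"
    proof -
      have "c * cnj s = - (of_real r * (s * cnj s))" unfolding c_def by (simp add: mult.assoc)
      then show ?thesis unfolding sc by simp
    qed
    have e2: "cnj c * s = - of_real (r * m)"
    proof -
      have "cnj c * s = - (of_real r * (s * cnj s))" unfolding c_def by (simp add: algebra_simps)
      then show ?thesis unfolding sc by simp
    qed
    have e3: "c * cnj c = of_real (r\<^sup>2 * m)"
    proof -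
      have "c * cnj c = of_real r * of_real r * (s * cnj s)" unfolding c_def by (simp add: algebra_simps)
      then show ?thesis unfolding sc by (simp add: power2_eq_square)
    qed
    have "Re (cinner (B *v (x + c *s y)) (x + c *s y)) = a - 2 * r * m + r\<^sup>2 * m * b"
      unfolding E0 e1 e2 e3 a_def b_def by simp
    then show ?thesis using pos[of "x + c *s y"] by simp
  qed
  have b0: "b \<ge> 0" unfolding b_def by (rule pos)
  have m0: "m \<ge> 0" unfolding m_def by simp
  show ?thesis
  proof (cases "b = 0")
    case True
    show ?thesis
    proof (rule ccontr)
      assume "\<not> ?thesis"
      then have "\<not> m \<le> a * b" unfolding m_def s_def a_def b_def .
      with True have mpos: "m > 0" by simp
      have "a - 2 * ((a + 1) / (2 * m)) * m + ((a + 1) / (2 * m))\<^sup>2 * m * b \<ge> 0" by (rule key)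
      then have "a - (a + 1) \<ge> 0" using True mpos by simp
      then show False by simp
    qed
  next
    case False
    then have bpos: "b > 0" using b0 by simp
    have "a - 2 * (1 / b) * m + (1 / b)\<^sup>2 * m * b \<ge> 0" by (rule key)
    then have "a - m / b \<ge> 0" using bpos by (simp add: power2_eq_square field_simps)
    then have "m \<le> a * b" using bpos by (simp add: field_simps)
    then show ?thesis unfolding m_def s_def a_def b_def .
  qed
qed

lemma contraction_of_bounds:
  fixes B :: "'n::finite cmat"
  assumes sa: "adjoint_mat B = B" and pos: "\<And>x. Re (cinner (B *v x) x) \<ge> 0"
    and le: "\<And>x. Re (cinner (B *v x) x) \<le> (norm x)\<^sup>2"
  shows "op_norm B \<le> 1"
  unfolding op_norm_def
proof (rule onorm_le)
  fix x
  let ?y = "B *v x"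
  have "norm (cinner (B *v x) ?y) = (norm ?y)\<^sup>2" unfolding cinner_self by (simp add: norm_power)
  then have "(norm ?y)\<^sup>2 * (norm ?y)\<^sup>2 = (norm (cinner (B *v x) ?y))\<^sup>2"
    by (simp add: power2_eq_square)
  also have "\<dots> \<le> Re (cinner (B *v x) x) * Re (cinner (B *v ?y) ?y)" by (rule cs_psd[OF sa pos])
  also have "\<dots> \<le> (norm x)\<^sup>2 * (norm ?y)\<^sup>2"
    by (intro mult_mono le pos) auto
  finally have *: "(norm ?y)\<^sup>2 * (norm ?y)\<^sup>2 \<le> (norm x)\<^sup>2 * (norm ?y)\<^sup>2" .
  have "(norm ?y)\<^sup>2 \<le> (norm x)\<^sup>2"
  proof (cases "norm ?y = 0")
    case True then show ?thesis by simp
  next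
    case False then have "(norm ?y)\<^sup>2 > 0" by simp
    from mult_right_le_imp_le[OF * this] show ?thesis .
  qed
  then show "norm (B *v x) \<le> 1 * norm x" by (simp add: power2_le_iff_abs_le)
qed

lemma F_dissipative:
  fixes P :: "'n::finite cmat"
  assumes nrm: "op_norm P \<le> 1" and inv: "invertible (P - mat 1)"
  shows "Re (cinner (((P + mat 1) ** matrix_inv (P - mat 1)) *v x) x) \<le> 0"
proof -
  define y where "y = matrix_inv (P - mat 1) *v x"
  have xy: "x = P *v y - y"
  proof -
    have "x = ((P - mat 1) ** matrix_inv (P - mat 1)) *v x" using matrix_inv_works(1)[OF inv] by simp
    also have "\<dots> = (P - mat 1) *v y" unfolding y_def by (simp add: matrix_vector_mul_assoc)
    also have "\<dots> = P *v y - y" by (simp add: mvec_diff)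
    finally show ?thesis .
  qed
  have Fx: "((P + mat 1) ** matrix_inv (P - mat 1)) *v x = P *v y + y"
    unfolding y_def by (simp add: matrix_vector_mul_assoc[symmetric] mvec_add)
  have "cinner (P *v y + y) (P *v y - y) =
      cinner (P *v y) (P *v y) - cinner (P *v y) y + cinner y (P *v y) - cinner y y"
    by (simp add: cinner_add_left cinner_diff_right algebra_simps)
  moreover have "Re (cinner y (P *v y) - cinner (P *v y) y) = 0"
  proof -
    have "cinner y (P *v y) = cnj (cinner (P *v y) y)" by (simp add: cinner_cnj)
    then show ?thesis by simp
  qed
  ultimately have "Re (cinner (P *v y + y) (P *v y - y)) = (norm (P *v y))\<^sup>2 - (norm y)\<^sup>2"
    by (simp add: cinner_norm)
  moreover have "norm (P *v y) \<le> norm y"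
  proof -
    have "norm (P *v y) \<le> onorm ((*v) P) * norm y"
      by (rule onorm[OF matrix_vector_mul_bounded_linear])
    also have "\<dots> \<le> 1 * norm y"
      using nrm unfolding op_norm_def by (intro mult_right_mono) auto
    finally show ?thesis by simp
  qed
  then have "(norm (P *v y))\<^sup>2 \<le> (norm y)\<^sup>2" by (simp add: power_mono)
  ultimately show ?thesis using Fx xy by simp
qed



lemma zeta_0: "zeta 0 = -1" by (simp add: zeta_def)
lemma zeta_half: "zeta (1/2) = -3" by (simp add: zeta_def field_simps)

lemma zeta_alt: "z \<noteq> 1 \<Longrightarrow> zeta z = - ((1 + z) / (1 - z))"
  by (simp add: zeta_def field_simps)

lemma cinner_cscale_m: "cinner (cscale c M *v x) x = c * cinner (M *v x) x"
  by (simp add: mvec_cscale cinner_scale_left)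

lemma cinner_add_m: "cinner ((M + N) *v x) x = cinner (M *v x) x + cinner (N *v x) x"
  for M N :: "'n::finite cmat"
  by (simp add: mvec_add cinner_add_left)

lemma cinner_diff_m: "cinner ((M - N) *v x) x = cinner (M *v x) x - cinner (N *v x) x"
  for M N :: "'n::finite cmat"
  by (simp add: mvec_diff cinner_diff_left)

lemma hol_quad:
  assumes "mhol F S"
  shows "(\<lambda>z. cinner (F z *v x) x) holomorphic_on S"
  using assms unfolding mhol_def cinner_def matrix_vector_mult_def
  by (auto intro!: holomorphic_intros)

lemma per_vector:
  fixes F :: "complex \<Rightarrow> 'n::finite cmat"
  assumes hol: "mhol F (ball 0 1)"
    and lo: "\<And>z x. z \<in> ball 0 1 \<Longrightarrow> Re (zeta z) * (norm x)\<^sup>2 \<le> Re (cinner (F z *v x) x)"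
    and up: "\<And>z x. z \<in> ball 0 1 \<Longrightarrow> Re (cinner (F z *v x) x) \<le> 0"
  shows "\<exists>a b::real. 0 \<le> b \<and> b \<le> (norm x)\<^sup>2 \<and>
            (\<forall>z\<in>ball 0 1. cinner (F z *v x) x = \<i> * of_real a + of_real b * zeta z)"
proof (cases "x = 0")
  case True
  then show ?thesis by (intro exI[of _ 0]) simp
next
  case False
  define n2 where "n2 = (norm x)\<^sup>2"
  have n2: "n2 > 0" unfolding n2_def using False by simp
  define h where "h = (\<lambda>z. - cinner (F z *v x) x / of_real n2)"
  have holh: "h holomorphic_on ball 0 1"
    unfolding h_def by (intro holomorphic_intros hol_quad[OF hol]) (use n2 in auto)
  have ne1: "z \<noteq> 1" if "z \<in> ball (0::complex) 1" for z using that by (auto simp: dist_norm)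
  have bnd: "0 \<le> Re (h z) \<and> Re (h z) \<le> Re ((1 + z) / (1 - z))" if z: "z \<in> ball 0 1" for z
  proof -
    have r: "Re (h z) = - Re (cinner (F z *v x) x) / n2" unfolding h_def by simp
    have "Re (cinner (F z *v x) x) \<le> 0" by (rule up[OF z])
    then have 1: "0 \<le> Re (h z)" unfolding r using n2 by (simp add: divide_nonpos_pos)
    have "Re (zeta z) * n2 \<le> Re (cinner (F z *v x) x)" unfolding n2_def by (rule lo[OF z])
    then have "- Re (cinner (F z *v x) x) / n2 \<le> - Re (zeta z)"
      using n2 by (simp add: field_simps)
    also have "- Re (zeta z) = Re ((1 + z) / (1 - z))" using zeta_alt[OF ne1[OF z]] by simp
    finally show ?thesis using 1 unfolding r by simp
  qed
  obtain \<beta> \<gamma> :: real where bg: "0 \<le> \<beta>" "\<beta> \<le> 1"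
    and eq: "\<forall>z\<in>ball (0::complex) 1. h z = \<i> * of_real \<gamma> + of_real \<beta> * ((1 + z) / (1 - z))"
    using herglotz[OF holh bnd] by blast
  have c1: "0 \<le> n2 * \<beta>" using n2 bg by simp
  have c2: "n2 * \<beta> \<le> (norm x)\<^sup>2" using n2 bg unfolding n2_def by (simp add: mult_left_le)
  have c3: "\<forall>z\<in>ball 0 1. cinner (F z *v x) x = \<i> * of_real (- n2 * \<gamma>) + of_real (n2 * \<beta>) * zeta z"
  proof
    fix z :: complex assume z: "z \<in> ball 0 1"
    have "cinner (F z *v x) x = - of_real n2 * h z" unfolding h_def using n2 by simp
    also have "\<dots> = - of_real n2 * (\<i> * of_real \<gamma> + of_real \<beta> * ((1 + z) / (1 - z)))"
      using eq z by simp
    also have "\<dots> = \<i> * of_real (- n2 * \<gamma>) + of_real (n2 * \<beta>) * zeta z"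
    proof -
      have "1 - z \<noteq> 0" using ne1[OF z] by simp
      then show ?thesis unfolding zeta_alt[OF ne1[OF z]] by (simp add: field_simps)
    qed
    finally show "cinner (F z *v x) x = \<i> * of_real (- n2 * \<gamma>) + of_real (n2 * \<beta>) * zeta z" .
  qed
  show ?thesis using c1 c2 c3 by blast
qed

lemma representation:
  fixes F :: "complex \<Rightarrow> 'n::finite cmat"
  assumes hol: "mhol F (ball 0 1)"
    and lo: "\<And>z x. z \<in> ball 0 1 \<Longrightarrow> Re (zeta z) * (norm x)\<^sup>2 \<le> Re (cinner (F z *v x) x)"
    and up: "\<And>z x. z \<in> ball 0 1 \<Longrightarrow> Re (cinner (F z *v x) x) \<le> 0"
  defines "B \<equiv> cscale (- 1 / 2) (F (1/2) - F 0)"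
  defines "A \<equiv> cscale (- \<i>) (F 0 + B)"
  shows "\<forall>z\<in>ball 0 1. F z = cscale \<i> A + cscale (zeta z) B"
    and "\<And>x. Im (cinner (A *v x) x) = 0"
    and "\<And>x. Im (cinner (B *v x) x) = 0 \<and> 0 \<le> Re (cinner (B *v x) x) \<and> Re (cinner (B *v x) x) \<le> (norm x)\<^sup>2"
proof -
  have "\<forall>x. \<exists>a b::real. 0 \<le> b \<and> b \<le> (norm x)\<^sup>2 \<and>
            (\<forall>z\<in>ball 0 1. cinner (F z *v x) x = \<i> * of_real a + of_real b * zeta z)"
    using per_vector[OF hol lo up] by blast
  then obtain fa fb where fab: "\<And>x. 0 \<le> fb x \<and> fb x \<le> (norm x)\<^sup>2 \<and>
            (\<forall>z\<in>ball 0 1. cinner (F z *v x) x = \<i> * of_real (fa x) + of_real (fb x) * zeta z)"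
    by metis
  have h0: "(0::complex) \<in> ball 0 1" by simp
  have h1: "(1/2::complex) \<in> ball 0 1" by (simp add: norm_divide)
  have QB: "cinner (B *v x) x = of_real (fb x)" for x
  proof -
    have "cinner (B *v x) x = (- 1 / 2) * (cinner (F (1/2) *v x) x - cinner (F 0 *v x) x)"
      unfolding B_def cinner_cscale_m cinner_diff_m ..
    also have "\<dots> = of_real (fb x)"
      using fab[of x] h0 h1 by (simp add: zeta_0 zeta_half algebra_simps)
    finally show ?thesis .
  qed
  have QA: "cinner (A *v x) x = of_real (fa x)" for x
  proof -
    have "cinner (A *v x) x = (- \<i>) * (cinner (F 0 *v x) x + cinner (B *v x) x)"
      unfolding A_def cinner_cscale_m cinner_add_m ..
    also have "\<dots> = of_real (fa x)"
      using fab[of x] h0 unfolding QB by (simp add: zeta_0 algebra_simps)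
    finally show ?thesis .
  qed
  show "\<forall>z\<in>ball 0 1. F z = cscale \<i> A + cscale (zeta z) B"
  proof
    fix z :: complex assume z: "z \<in> ball 0 1"
    have "cinner ((F z - (cscale \<i> A + cscale (zeta z) B)) *v x) x = 0" for x
      unfolding cinner_diff_m cinner_add_m cinner_cscale_m QA QB using fab[of x] z by simp
    then have "F z - (cscale \<i> A + cscale (zeta z) B) = 0" by (rule quad_zero)
    then show "F z = cscale \<i> A + cscale (zeta z) B" by simp
  qed
  show "\<And>x. Im (cinner (A *v x) x) = 0" unfolding QA by simp
  show "\<And>x. Im (cinner (B *v x) x) = 0 \<and> 0 \<le> Re (cinner (B *v x) x) \<and> Re (cinner (B *v x) x) \<le> (norm x)\<^sup>2"
    unfolding QB using fab by simp
qed



lemma mat_mult_mat: "(mat a :: 'n::finite cmat) ** mat b = mat (a * b)"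
proof -
  have "(\<Sum>k\<in>UNIV. (if i = k then a else 0) * (if k = j then b else 0)) = (if i = j then a * b else 0)"
    for i j :: 'n
  proof -
    have "(if i = k then a else 0) * (if k = j then b else 0) = (if k = i then (if i = j then a * b else 0) else 0)"
      for k by auto
    then show ?thesis by (simp add: sum.delta')
  qed
  then show ?thesis by (simp add: vec_eq_iff mmult_nth mat_nth)
qed

lemma mat_add_mat: "(mat a :: 'n::finite cmat) + mat b = mat (a + b)"
  by (simp add: vec_eq_iff mat_nth)

lemma mat_diff_mat: "(mat a :: 'n::finite cmat) - mat b = mat (a - b)"
  by (simp add: vec_eq_iff mat_nth)

lemma cscale_mat: "cscale c (mat a :: 'n::finite cmat) = mat (c * a)"
  by (simp add: vec_eq_iff mat_nth)

lemma phi_op_scalar: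
  assumes "z \<noteq> 1"
  shows "phi_op t (mat z :: 'n::finite cmat) = mexp (cscale (of_real t) (mat (zeta z)))"
proof -
  have "matrix_inv (mat z - mat 1 :: 'n cmat) = mat (1 / (z - 1))"
    unfolding mat_diff_mat using assms by (intro matrix_inv_unique) (simp_all add: mat_mult_mat)
  then have "(mat z + mat 1) ** matrix_inv (mat z - mat 1 :: 'n cmat) = mat (zeta z)"
    by (simp add: mat_add_mat mat_mult_mat zeta_def)
  then show ?thesis unfolding phi_op_def by simp
qed

lemma chain_apply:
  "foldr (\<lambda>j T. mult_op (phi_comp t (\<psi> j)) \<circ> T) js id f z =
     foldr (\<lambda>j M. phi_op t (\<psi> j z) ** M) js (mat 1) *v f z"
  by (induction js) (simp_all add: mult_op_def phi_comp_def matrix_vector_mul_assoc)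

lemma const_hardy2: "(\<lambda>_. v) \<in> hardy2"
  unfolding hardy2_def
  by (intro CollectI conjI allI exI[of _ "(norm v)\<^sup>2 * (2 * pi)"] impI)
     (auto intro!: holomorphic_intros)

lemma cinner_sum_m:
  "cinner ((\<Sum>j\<in>S. M j) *v x) x = (\<Sum>j\<in>S. cinner (M j *v x) x)" for M :: "'a \<Rightarrow> 'n::finite cmat"
proof (induction S rule: infinite_finite_induct)
  case (insert a F)
  then show ?case by (simp add: cinner_add_m)
qed (simp_all add: matrix_vector_mult_def cinner_def)

lemma vandermonde3:
  fixes a b c :: complex
  assumes e1: "- a + \<i> * (-1) * b + (-1) * (-1) * c = 0"
    and e2: "- a + \<i> * (-3) * b + (-3) * (-3) * c = 0"
    and e3: "- a + \<i> * (-1/3) * b + (-1/3) * (-1/3) * c = 0"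
  shows "a = 0 \<and> b = 0 \<and> c = 0"
proof -
  have cc: "c = a + \<i> * b"
  proof -
    have "c = (- a + \<i> * (-1) * b + (-1) * (-1) * c) + (a + \<i> * b)" by (simp add: algebra_simps)
    from this[unfolded e1] show ?thesis by simp
  qed
  have g2: "8 * a + 6 * \<i> * b = 0"
  proof -
    have "8 * a + 6 * \<i> * b = - a + \<i> * (-3) * b + (-3) * (-3) * c" unfolding cc by (simp add: algebra_simps)
    from this[unfolded e2] show ?thesis by simp
  qed
  have g3: "- 8 * a - 2 * \<i> * b = 0"
  proof -
    have "- 8 * a - 2 * \<i> * b = 9 * (- a + \<i> * (-1/3) * b + (-1/3) * (-1/3) * c)" unfolding cc by (simp add: algebra_simps)
    from this[unfolded e3] show ?thesis by simp
  qed
  have "4 * \<i> * b = (8 * a + 6 * \<i> * b) + (- 8 * a - 2 * \<i> * b)" by (simp add: algebra_simps)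
  then have b0: "b = 0" using g2 g3 by simp
  then have a0: "a = 0" using g2 by simp
  show ?thesis using a0 b0 cc by simp
qed

lemma expand_rep:
  fixes P Q P' Q' :: "'n::finite cmat"
  shows "(cscale \<i> P + cscale w Q) ** (cscale \<i> P' + cscale w Q') =
     cscale (-1) (P ** P') + cscale (\<i> * w) (P ** Q' + Q ** P') + cscale (w * w) (Q ** Q')"
  by (simp add: matrix_add_ldistrib matrix_add_rdistrib' cscale_mult_left cscale_mult_right cscale_cscale
      cscale_add algebra_simps)



lemma mat_mvec: "(mat c :: 'n::finite cmat) *v x = c *s x"
proof -
  have "(\<Sum>j\<in>UNIV. (if i = j then c else 0) * x $ j) = c * x $ i" for i :: 'n
  proof -
    have "(if i = j then c else 0) * x $ j = (if j = i then c * x $ i else 0)" for j by auto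
    then show ?thesis by (simp add: sum.delta)
  qed
  then show ?thesis by (simp add: vec_eq_iff matrix_vector_mult_def mat_nth)
qed

lemma cayley_inverse:
  fixes P :: "'n::finite cmat"
  assumes inv: "invertible (P - mat 1)"
  defines "F \<equiv> (P + mat 1) ** matrix_inv (P - mat 1)"
  shows "P = (F + mat 1) ** matrix_inv (F - mat 1)"
proof -
  define V where "V = matrix_inv (P - mat 1)"
  have PV: "(P - mat 1) ** V = mat 1" "V ** (P - mat 1) = mat 1"
    unfolding V_def using matrix_inv_works[OF inv] by auto
  have Fm: "F - mat 1 = cscale 2 V"
  proof -
    have "F - mat 1 = (P + mat 1) ** V - (P - mat 1) ** V" unfolding F_def V_def PV[unfolded V_def] ..
    also have "\<dots> = ((P + mat 1) - (P - mat 1)) ** V" by (rule matrix_diff_rdistrib[symmetric])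
    also have "(P + mat 1) - (P - mat 1) = cscale 2 (mat 1 :: 'n cmat)" by (simp add: vec_eq_iff)
    finally show ?thesis by (simp add: cscale_mult_left)
  qed
  have Fp: "F + mat 1 = cscale 2 (P ** V)"
  proof -
    have "F + mat 1 = (P + mat 1) ** V + (P - mat 1) ** V" unfolding F_def V_def PV[unfolded V_def] ..
    also have "\<dots> = ((P + mat 1) + (P - mat 1)) ** V" by (rule matrix_add_rdistrib'[symmetric])
    also have "(P + mat 1) + (P - mat 1) = cscale 2 P" by (simp add: vec_eq_iff)
    finally show ?thesis by (simp add: cscale_mult_left)
  qed
  have iv: "matrix_inv (F - mat 1) = cscale (1/2) (P - mat 1)"
    unfolding Fm by (intro matrix_inv_unique) (simp_all add: cscale_mult_left cscale_mult_right cscale_cscale PV)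
  have "(F + mat 1) ** matrix_inv (F - mat 1) = P ** (V ** (P - mat 1))"
    unfolding Fp iv by (simp add: cscale_mult_left cscale_mult_right cscale_cscale matrix_mul_assoc)
  also have "\<dots> = P" by (simp add: PV)
  finally show ?thesis by simp
qed



lemma coeff3:
  fixes P1 Q1 R1 P2 Q2 R2 :: "'n::finite cmat"
  assumes "\<And>w. w \<in> {-1, -3, -1/3} \<Longrightarrow>
    cscale (-1) P1 + cscale (\<i> * w) Q1 + cscale (w * w) R1 = cscale (-1) P2 + cscale (\<i> * w) Q2 + cscale (w * w) R2"
  shows "P1 = P2 \<and> Q1 = Q2 \<and> R1 = R2"
proof -
  have "P1 $ p $ q = P2 $ p $ q \<and> Q1 $ p $ q = Q2 $ p $ q \<and> R1 $ p $ q = R2 $ p $ q" for p q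
  proof -
    define a where "a = P1 $ p $ q - P2 $ p $ q"
    define b where "b = Q1 $ p $ q - Q2 $ p $ q"
    define c where "c = R1 $ p $ q - R2 $ p $ q"
    have e: "- a + \<i> * w * b + w * w * c = 0" if w: "w \<in> {-1, -3, -1/3}" for w
    proof -
      have "(cscale (-1) P1 + cscale (\<i> * w) Q1 + cscale (w * w) R1) $ p $ q =
            (cscale (-1) P2 + cscale (\<i> * w) Q2 + cscale (w * w) R2) $ p $ q"
        using assms[OF w] by simp
      then show ?thesis unfolding a_def b_def c_def by (simp add: algebra_simps)
    qed
    have "a = 0 \<and> b = 0 \<and> c = 0"
      using vandermonde3[OF e[of "-1"] e[of "-3"] e[of "-1/3"]] by simp
    then show ?thesis unfolding a_def b_def c_def by simp
  qed
  then show ?thesis by (simp add: vec_eq_iff)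
qed

theorem theorem4p9:
  fixes n :: nat and \<psi> :: "nat \<Rightarrow> complex \<Rightarrow> complex ^ 'n ^ 'n"
  assumes "n \<ge> 2"
    and "factorizing_tuple n \<psi>"
  shows "\<exists>A B. AB_conditions n \<psi> A B \<and>
           (\<forall>A' B'. AB_conditions n \<psi> A' B' \<longrightarrow> (\<forall>j\<in>{1..n}. A' j = A j \<and> B' j = B j)) \<and>
           (\<forall>z\<in>unit_disc. \<forall>j\<in>{1..n}.
              \<psi> j z = (cscale \<i> (A j) + cscale (zeta z) (B j) + mat 1) **
                       matrix_inv (cscale \<i> (A j) + cscale (zeta z) (B j) - mat 1))"
proof -
  have inC: "\<And>j. j \<in> {1..n} \<Longrightarrow> \<psi> j \<in> classC"
    and commH: "\<And>j k t. j \<in> {1..n} \<Longrightarrow> k \<in> {1..n} \<Longrightarrow> t \<ge> 0 \<Longrightarrow>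
        H2_op_eq (mult_op (phi_comp t (\<psi> j)) \<circ> mult_op (phi_comp t (\<psi> k)))
                 (mult_op (phi_comp t (\<psi> k)) \<circ> mult_op (phi_comp t (\<psi> j)))"
    and chainH: "\<And>t. t \<ge> 0 \<Longrightarrow> H2_op_eq (mult_chain t \<psi> n) (mult_op (phi_comp t zfun))"
    using assms(2) unfolding factorizing_tuple_def by auto
  have disc: "unit_disc = ball (0::complex) 1" by (simp add: unit_disc_def)
  define F where "F = (\<lambda>j z. (\<psi> j z + mat 1) ** matrix_inv (\<psi> j z - mat 1))"
  define B where "B = (\<lambda>j. cscale (- 1 / 2) (F j (1/2) - F j 0))"
  define A where "A = (\<lambda>j. cscale (- \<i>) (F j 0 + B j))"
  have inv: "invertible (\<psi> j z - mat 1)" if j: "j \<in> {1..n}" and z: "z \<in> ball 0 1" for j z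
  proof (rule invertible_of_inj)
    fix x assume "(\<psi> j z - mat 1) *v x = 0"
    then have "\<psi> j z *v x = x" by (simp add: mvec_diff)
    then show "x = 0" using inC[OF j] z unfolding classC_def disc by auto
  qed
  have nrm: "op_norm (\<psi> j z) \<le> 1" if j: "j \<in> {1..n}" and z: "z \<in> ball 0 1" for j z
    using inC[OF j] z unfolding classC_def disc by auto
  have holF: "mhol (F j) (ball 0 1)" if j: "j \<in> {1..n}" for j
  proof -
    have hp: "mhol (\<psi> j) (ball 0 1)"
      using inC[OF j] unfolding classC_def Hinf_op_def mhol_def disc by auto
    show ?thesis unfolding F_def
      by (intro mhol_mult mhol_add mhol_const mhol_inv mhol_diff hp) (use inv j in auto)
  qed
  have phiF: "phi_op t (\<psi> j z) = mexp (cscale (of_real t) (F j z))" for t j z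
    unfolding phi_op_def F_def ..
  have ne1: "z \<noteq> 1" if "z \<in> ball (0::complex) 1" for z using that by (auto simp: dist_norm)
  have prodeq: "foldr (\<lambda>j M. phi_op t (\<psi> j z) ** M) [1..<Suc n] (mat 1) = phi_op t (zfun z)"
    if z: "z \<in> ball 0 1" and t: "t \<ge> 0" for z t
  proof -
    have "foldr (\<lambda>j M. phi_op t (\<psi> j z) ** M) [1..<Suc n] (mat 1) *v v = phi_op t (zfun z) *v v" for v
    proof -
      have "mult_chain t \<psi> n (\<lambda>_. v) z = mult_op (phi_comp t zfun) (\<lambda>_. v) z"
        using chainH[OF t] const_hardy2[of v] z unfolding H2_op_eq_def disc by blast
      then show ?thesis unfolding mult_chain_def chain_apply by (simp add: mult_op_def phi_comp_def)
    qed
    then show ?thesis by (simp add: matrix_eq)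
  qed
  have commeq: "phi_op t (\<psi> j z) ** phi_op t (\<psi> k z) = phi_op t (\<psi> k z) ** phi_op t (\<psi> j z)"
    if j: "j \<in> {1..n}" and k: "k \<in> {1..n}" and z: "z \<in> ball 0 1" and t: "t \<ge> 0" for j k z t
  proof -
    have "(phi_op t (\<psi> j z) ** phi_op t (\<psi> k z)) *v v = (phi_op t (\<psi> k z) ** phi_op t (\<psi> j z)) *v v" for v
    proof -
      have "(mult_op (phi_comp t (\<psi> j)) \<circ> mult_op (phi_comp t (\<psi> k))) (\<lambda>_. v) z =
            (mult_op (phi_comp t (\<psi> k)) \<circ> mult_op (phi_comp t (\<psi> j))) (\<lambda>_. v) z"
        using commH[OF j k t] const_hardy2[of v] z unfolding H2_op_eq_def disc by blast
      then show ?thesis by (simp add: mult_op_def phi_comp_def matrix_vector_mul_assoc)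
    qed
    then show ?thesis by (simp add: matrix_eq)
  qed
  have sumF: "(\<Sum>j\<in>{1..n}. F j z) = mat (zeta z)" if z: "z \<in> ball 0 1" for z
  proof -
    have "sum_list (map (\<lambda>j. F j z) [1..<Suc n]) = mat (zeta z)"
    proof (rule sum_from_prod)
      fix t :: real assume t: "t \<in> {0..1}"
      show "foldr (\<lambda>j M. mexp (cscale (of_real t) (F j z)) ** M) [1..<Suc n] (mat 1) =
            mexp (cscale (of_real t) (mat (zeta z)))"
        using prodeq[OF z, of t] t unfolding phiF zfun_def phi_op_scalar[OF ne1[OF z]] by simp
    qed
    moreover have eqs: "{1..n} = set [1..<Suc n]" by auto
    have "(\<Sum>j\<in>{1..n}. F j z) = sum_list (map (\<lambda>j. F j z) [1..<Suc n])"
      by (simp only: eqs sum_set_upt_conv_sum_list_nat)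
    ultimately show ?thesis by simp
  qed
  have commF: "F j z ** F k z = F k z ** F j z"
    if j: "j \<in> {1..n}" and k: "k \<in> {1..n}" and z: "z \<in> ball 0 1" for j k z
    by (rule comm_from_exp) (use commeq[OF j k z] in \<open>auto simp: phiF\<close>)
  have up: "Re (cinner (F j z *v x) x) \<le> 0" if j: "j \<in> {1..n}" and z: "z \<in> ball 0 1" for j z x
    unfolding F_def by (rule F_dissipative[OF nrm[OF j z] inv[OF j z]])
  have lo: "Re (zeta z) * (norm x)\<^sup>2 \<le> Re (cinner (F j z *v x) x)"
    if j: "j \<in> {1..n}" and z: "z \<in> ball 0 1" for j z x
  proof -
    have "(\<Sum>k\<in>{1..n}. cinner (F k z *v x) x) = cinner ((\<Sum>k\<in>{1..n}. F k z) *v x) x"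
      by (rule cinner_sum_m[symmetric])
    also have "\<dots> = zeta z * of_real ((norm x)\<^sup>2)"
      unfolding sumF[OF z] mat_mvec cinner_scale_left cinner_self ..
    finally have S: "(\<Sum>k\<in>{1..n}. cinner (F k z *v x) x) = zeta z * of_real ((norm x)\<^sup>2)" .
    have "(\<Sum>k\<in>{1..n}. Re (cinner (F k z *v x) x)) = Re (\<Sum>k\<in>{1..n}. cinner (F k z *v x) x)"
      by (simp add: Re_sum)
    also have "\<dots> = Re (zeta z) * (norm x)\<^sup>2" unfolding S by simp
    finally have "(\<Sum>k\<in>{1..n}. Re (cinner (F k z *v x) x)) = Re (zeta z) * (norm x)\<^sup>2" .
    moreover have "(\<Sum>k\<in>{1..n}. Re (cinner (F k z *v x) x)) =
        Re (cinner (F j z *v x) x) + (\<Sum>k\<in>{1..n} - {j}. Re (cinner (F k z *v x) x))"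
      by (rule sum.remove) (use j in auto)
    moreover have "(\<Sum>k\<in>{1..n} - {j}. Re (cinner (F k z *v x) x)) \<le> 0"
      by (rule sum_nonpos) (use up z in auto)
    ultimately show ?thesis by linarith
  qed
  have rep: "\<forall>z\<in>ball 0 1. F j z = cscale \<i> (A j) + cscale (zeta z) (B j)"
      "\<And>x. Im (cinner (A j *v x) x) = 0"
      "\<And>x. Im (cinner (B j *v x) x) = 0 \<and> 0 \<le> Re (cinner (B j *v x) x) \<and> Re (cinner (B j *v x) x) \<le> (norm x)\<^sup>2"
    if j: "j \<in> {1..n}" for j
  proof -
    note R = representation[of "F j", OF holF[OF j] lo[OF j] up[OF j]]
    show "\<forall>z\<in>ball 0 1. F j z = cscale \<i> (A j) + cscale (zeta z) (B j)"
      unfolding A_def B_def by (rule R(1))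
    show "\<And>x. Im (cinner (A j *v x) x) = 0"
      unfolding A_def B_def by (rule R(2))
    show "\<And>x. Im (cinner (B j *v x) x) = 0 \<and> 0 \<le> Re (cinner (B j *v x) x) \<and> Re (cinner (B j *v x) x) \<le> (norm x)\<^sup>2"
      unfolding A_def B_def by (rule R(3))
  qed
  have h0: "(0::complex) \<in> ball 0 1" by simp
  have h1: "(1/2::complex) \<in> ball 0 1" by (simp add: norm_divide)
  have h2: "(-1/2::complex) \<in> ball 0 1" by (simp add: norm_divide)
  have zeta_mhalf: "zeta (-1/2) = -1/3" by (simp add: zeta_def field_simps)
  have c1: "\<forall>j\<in>{1..n}. self_adjoint (A j) \<and> positive_op (B j) \<and> contraction (B j)"
  proof
    fix j assume j: "j \<in> {1..n}"
    have saA: "adjoint_mat (A j) = A j" by (rule real_quad_selfadj) (use rep(2)[OF j] in auto)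
    have saB: "adjoint_mat (B j) = B j" by (rule real_quad_selfadj) (use rep(3)[OF j] in auto)
    have "op_norm (B j) \<le> 1" by (rule contraction_of_bounds[OF saB]) (use rep(3)[OF j] in auto)
    then show "self_adjoint (A j) \<and> positive_op (B j) \<and> contraction (B j)"
      unfolding self_adjoint_def positive_op_def contraction_def using saA rep(3)[OF j] by auto
  qed
  have c23: "A j ** A k = A k ** A j \<and> (A j ** B k + B j ** A k = A k ** B j + B k ** A j) \<and>
       B j ** B k = B k ** B j" if j: "j \<in> {1..n}" and k: "k \<in> {1..n}" for j k
  proof -
    have "cscale (-1) (A j ** A k) + cscale (\<i> * w) (A j ** B k + B j ** A k) + cscale (w * w) (B j ** B k) =
          cscale (-1) (A k ** A j) + cscale (\<i> * w) (A k ** B j + B k ** A j) + cscale (w * w) (B k ** B j)"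
      if w: "w \<in> {-1, -3, -1/3}" for w
    proof -
      have "\<exists>z\<in>ball 0 1. w = zeta z"
      proof -
        from w consider "w = -1" | "w = -3" | "w = -1/3" by auto
        then show ?thesis
        proof cases
          case 1 then show ?thesis using h0 zeta_0 by metis
        next
          case 2 then show ?thesis using h1 zeta_half by metis
        next
          case 3 then show ?thesis using h2 zeta_mhalf by metis
        qed
      qed
      then obtain z where z: "z \<in> ball 0 1" and wz: "w = zeta z" by blast
      have "F j z ** F k z = F k z ** F j z" by (rule commF[OF j k z])
      then show ?thesis unfolding rep(1)[OF j, rule_format, OF z] rep(1)[OF k, rule_format, OF z] expand_rep wz .
    qed
    then show ?thesis using coeff3 by blast
  qed
  have c4: "(\<Sum>j\<in>{1..n}. B j) = mat 1"
  proof -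
    have "(\<Sum>j\<in>{1..n}. B j) = cscale (- 1 / 2) ((\<Sum>j\<in>{1..n}. F j (1/2)) - (\<Sum>j\<in>{1..n}. F j 0))"
      unfolding B_def by (simp add: cscale_sum cscale_diff sum_subtractf)
    also have "\<dots> = mat 1" unfolding sumF[OF h0] sumF[OF h1] zeta_0 zeta_half mat_diff_mat cscale_mat by simp
    finally show ?thesis .
  qed
  have c5: "(\<Sum>j\<in>{1..n}. A j) = 0"
  proof -
    have "(\<Sum>j\<in>{1..n}. A j) = cscale (- \<i>) ((\<Sum>j\<in>{1..n}. F j 0) + (\<Sum>j\<in>{1..n}. B j))"
      unfolding A_def by (simp add: cscale_sum cscale_add sum.distrib)
    also have "\<dots> = 0" unfolding sumF[OF h0] c4 zeta_0 mat_add_mat cscale_mat by simp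
    finally show ?thesis .
  qed
  have c6: "\<forall>z\<in>unit_disc. \<forall>j\<in>{1..n}.
        (\<psi> j z + mat 1) ** matrix_inv (\<psi> j z - mat 1) = cscale \<i> (A j) + cscale (zeta z) (B j)"
    using rep(1) unfolding disc F_def by blast
  have AB: "AB_conditions n \<psi> A B"
    unfolding AB_conditions_def using c1 c23 c4 c5 c6 by blast
  have uniq: "\<forall>A' B'. AB_conditions n \<psi> A' B' \<longrightarrow> (\<forall>j\<in>{1..n}. A' j = A j \<and> B' j = B j)"
  proof (intro allI impI ballI)
    fix A' B' j assume H: "AB_conditions n \<psi> A' B'" and j: "j \<in> {1..n}"
    have r: "F j z = cscale \<i> (A' j) + cscale (zeta z) (B' j)" if z: "z \<in> ball 0 1" for z
      using H j z unfolding AB_conditions_def disc F_def by blast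
    have eB: "B' j = B j"
      unfolding B_def r[OF h0] r[OF h1] zeta_0 zeta_half by (simp add: vec_eq_iff algebra_simps)
    have eA: "A' j = A j"
      unfolding A_def eB[symmetric] r[OF h0] zeta_0 by (simp add: vec_eq_iff algebra_simps)
    show "A' j = A j \<and> B' j = B j" using eA eB by simp
  qed
  have fin: "\<forall>z\<in>unit_disc. \<forall>j\<in>{1..n}.
              \<psi> j z = (cscale \<i> (A j) + cscale (zeta z) (B j) + mat 1) **
                       matrix_inv (cscale \<i> (A j) + cscale (zeta z) (B j) - mat 1)"
  proof (intro ballI)
    fix z j assume z: "z \<in> unit_disc" and j: "j \<in> {1..n}"
    have z': "z \<in> ball 0 1" using z disc by simp
    have "cscale \<i> (A j) + cscale (zeta z) (B j) = F j z" using rep(1)[OF j] z' by simp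
    then show "\<psi> j z = (cscale \<i> (A j) + cscale (zeta z) (B j) + mat 1) **
                       matrix_inv (cscale \<i> (A j) + cscale (zeta z) (B j) - mat 1)"
      unfolding F_def using cayley_inverse[OF inv[OF j z']] by simp
  qed
  show ?thesis using AB uniq fin by blast
qed


end
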